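(* Let $n\ge3$, let $\Phi,\Phi':\mathfrak{B}([n])^{op}\to\mathbf{Gpd}$ be functors and $\theta:\Phi\to\Phi'$ a natural transformation such that $\theta_S:\Phi(S)\to\Phi'(S)$ is an equivalence of categories for every $S\subseteq[n]$ with $n-3\le|S|\le n-1$. Then the induced functor $\operatorname{2lim}_{\mathfrak{B}([n])}\Phi\to\operatorname{2lim}_{\mathfrak{B}([n])}\Phi'$ is an equivalence of categories.
   Context: $[n]=\{1,\dots,n\}$; $\mathfrak{B}([n])$ is the poset of proper subsets of $[n]$ ordered by inclusion. For a functor $\Psi:I^{op}\to\mathbf{Gpd}$ on a poset, $\operatorname{2lim}\Psi$ is the groupoid whose objects are families $(a_U,\alpha_{U,V})$ with $a_U\in\Psi(U)$ and isomorphisms $\alpha_{U,V}:\Psi_{U,V}(a_V)\to a_U$ for $U\le V$ (where $\Psi_{U,V}:\Psi(V)\to\Psi(U)$) satisfying $\alpha_{U,U}=\mathrm{id}$ and $\alpha_{U,W}=\alpha_{U,V}\circ\Psi_{U,V}(\alpha_{V,W})$, and whose morphisms are families $g_U:a_U\to b_U$ with $g_U\circ\alpha_{U,V}=\beta_{U,V}\circ\Psi_{U,V}(g_V)$. The induced functor sends $(a_U,\alpha_{U,V})$ to $(\theta_U(a_U),\theta_U(\alpha_{U,V}))$. *)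

theory Defs
  imports Main
begin

record ('o, 'm) cat =
  cObj  :: "'o set"
  cArr  :: "'m set"
  cDom  :: "'m \<Rightarrow> 'o"
  cCod  :: "'m \<Rightarrow> 'o"
  cId   :: "'o \<Rightarrow> 'm"
  cComp :: "'m \<Rightarrow> 'm \<Rightarrow> 'm"   (* cComp C g f  =  g \<circ> f *)

definition hom :: "('o, 'm) cat \<Rightarrow> 'o \<Rightarrow> 'o \<Rightarrow> 'm set" where
  "hom C x y = {f \<in> cArr C. cDom C f = x \<and> cCod C f = y}"

definition category :: "('o, 'm) cat \<Rightarrow> bool" where
  "category C \<longleftrightarrow>
     (\<forall>f\<in>cArr C. cDom C f \<in> cObj C \<and> cCod C f \<in> cObj C) \<and>
     (\<forall>x\<in>cObj C. cId C x \<in> hom C x x) \<and>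
     (\<forall>f\<in>cArr C. \<forall>g\<in>cArr C. cCod C f = cDom C g \<longrightarrow>
         cComp C g f \<in> hom C (cDom C f) (cCod C g)) \<and>
     (\<forall>f\<in>cArr C. cComp C (cId C (cCod C f)) f = f \<and> cComp C f (cId C (cDom C f)) = f) \<and>
     (\<forall>f\<in>cArr C. \<forall>g\<in>cArr C. \<forall>h\<in>cArr C. cCod C f = cDom C g \<longrightarrow> cCod C g = cDom C h \<longrightarrow>
         cComp C h (cComp C g f) = cComp C (cComp C h g) f)"

definition c_iso :: "('o, 'm) cat \<Rightarrow> 'm \<Rightarrow> bool" where
  "c_iso C f \<longleftrightarrow> f \<in> cArr C \<and>
     (\<exists>g\<in>hom C (cCod C f) (cDom C f).
        cComp C g f = cId C (cDom C f) \<and> cComp C f g = cId C (cCod C f))"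

definition groupoid :: "('o, 'm) cat \<Rightarrow> bool" where
  "groupoid C \<longleftrightarrow> category C \<and> (\<forall>f\<in>cArr C. c_iso C f)"

record ('o1, 'm1, 'o2, 'm2) func =
  fobj :: "'o1 \<Rightarrow> 'o2"
  farr :: "'m1 \<Rightarrow> 'm2"

definition is_functor :: "('o1, 'm1) cat \<Rightarrow> ('o2, 'm2) cat \<Rightarrow> ('o1, 'm1, 'o2, 'm2) func \<Rightarrow> bool" where
  "is_functor C D F \<longleftrightarrow>
     (\<forall>x\<in>cObj C. fobj F x \<in> cObj D) \<and>
     (\<forall>f\<in>cArr C. farr F f \<in> hom D (fobj F (cDom C f)) (fobj F (cCod C f))) \<and>
     (\<forall>x\<in>cObj C. farr F (cId C x) = cId D (fobj F x)) \<and>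
     (\<forall>f\<in>cArr C. \<forall>g\<in>cArr C. cCod C f = cDom C g \<longrightarrow>
         farr F (cComp C g f) = cComp D (farr F g) (farr F f))"

definition id_func :: "('o, 'm, 'o, 'm) func" where
  "id_func = \<lparr>fobj = (\<lambda>x. x), farr = (\<lambda>f. f)\<rparr>"

definition func_comp :: "('o2, 'm2, 'o3, 'm3) func \<Rightarrow> ('o1, 'm1, 'o2, 'm2) func \<Rightarrow> ('o1, 'm1, 'o3, 'm3) func" where
  "func_comp G F = \<lparr>fobj = fobj G \<circ> fobj F, farr = farr G \<circ> farr F\<rparr>"

definition nat_iso :: "('o1, 'm1) cat \<Rightarrow> ('o2, 'm2) cat \<Rightarrow> ('o1, 'm1, 'o2, 'm2) func \<Rightarrow>
    ('o1, 'm1, 'o2, 'm2) func \<Rightarrow> ('o1 \<Rightarrow> 'm2) \<Rightarrow> bool" where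
  "nat_iso C D F G eta \<longleftrightarrow>
     (\<forall>x\<in>cObj C. eta x \<in> hom D (fobj F x) (fobj G x) \<and> c_iso D (eta x)) \<and>
     (\<forall>f\<in>cArr C. cComp D (eta (cCod C f)) (farr F f) = cComp D (farr G f) (eta (cDom C f)))"

definition equivalence :: "('o1, 'm1) cat \<Rightarrow> ('o2, 'm2) cat \<Rightarrow> ('o1, 'm1, 'o2, 'm2) func \<Rightarrow> bool" where
  "equivalence C D F \<longleftrightarrow> is_functor C D F \<and>
     (\<exists>G eta eps. is_functor D C G \<and>
        nat_iso C C id_func (func_comp G F) eta \<and>
        nat_iso D D (func_comp F G) id_func eps)"

definition Bn :: "nat \<Rightarrow> nat set set" where
  "Bn n = {U. U \<subset> {1..n}}"

text \<open>A functor Psi : B([n])^op -> Gpd: groupoids Psi U and restriction functors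
  P U V : Psi V -> Psi U for U \<subseteq> V, strictly functorial.\<close>
definition gpd_presheaf :: "nat \<Rightarrow> (nat set \<Rightarrow> ('o, 'm) cat) \<Rightarrow>
    (nat set \<Rightarrow> nat set \<Rightarrow> ('o, 'm, 'o, 'm) func) \<Rightarrow> bool" where
  "gpd_presheaf n Psi P \<longleftrightarrow>
     (\<forall>U\<in>Bn n. groupoid (Psi U)) \<and>
     (\<forall>U\<in>Bn n. \<forall>V\<in>Bn n. U \<subseteq> V \<longrightarrow> is_functor (Psi V) (Psi U) (P U V)) \<and>
     (\<forall>U\<in>Bn n. (\<forall>x\<in>cObj (Psi U). fobj (P U U) x = x) \<and> (\<forall>f\<in>cArr (Psi U). farr (P U U) f = f)) \<and>
     (\<forall>U\<in>Bn n. \<forall>V\<in>Bn n. \<forall>W\<in>Bn n. U \<subseteq> V \<longrightarrow> V \<subseteq> W \<longrightarrow>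
        (\<forall>x\<in>cObj (Psi W). fobj (P U V) (fobj (P V W) x) = fobj (P U W) x) \<and>
        (\<forall>f\<in>cArr (Psi W). farr (P U V) (farr (P V W) f) = farr (P U W) f))"

definition gpd_nat_trans :: "nat \<Rightarrow> (nat set \<Rightarrow> ('o, 'm) cat) \<Rightarrow> (nat set \<Rightarrow> nat set \<Rightarrow> ('o, 'm, 'o, 'm) func) \<Rightarrow>
    (nat set \<Rightarrow> ('o2, 'm2) cat) \<Rightarrow> (nat set \<Rightarrow> nat set \<Rightarrow> ('o2, 'm2, 'o2, 'm2) func) \<Rightarrow>
    (nat set \<Rightarrow> ('o, 'm, 'o2, 'm2) func) \<Rightarrow> bool" where
  "gpd_nat_trans n Psi P Psi' P' theta \<longleftrightarrow>
     (\<forall>U\<in>Bn n. is_functor (Psi U) (Psi' U) (theta U)) \<and>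
     (\<forall>U\<in>Bn n. \<forall>V\<in>Bn n. U \<subseteq> V \<longrightarrow>
        (\<forall>x\<in>cObj (Psi V). fobj (theta U) (fobj (P U V) x) = fobj (P' U V) (fobj (theta V) x)) \<and>
        (\<forall>f\<in>cArr (Psi V). farr (theta U) (farr (P U V) f) = farr (P' U V) (farr (theta V) f)))"

definition lim_obj :: "nat \<Rightarrow> (nat set \<Rightarrow> ('o, 'm) cat) \<Rightarrow> (nat set \<Rightarrow> nat set \<Rightarrow> ('o, 'm, 'o, 'm) func) \<Rightarrow>
    ((nat set \<Rightarrow> 'o) \<times> (nat set \<Rightarrow> nat set \<Rightarrow> 'm)) set" where
  "lim_obj n Psi P = {(a, al).
     (\<forall>U. U \<notin> Bn n \<longrightarrow> a U = undefined) \<and>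
     (\<forall>U V. \<not> (U \<in> Bn n \<and> V \<in> Bn n \<and> U \<subseteq> V) \<longrightarrow> al U V = undefined) \<and>
     (\<forall>U\<in>Bn n. a U \<in> cObj (Psi U)) \<and>
     (\<forall>U\<in>Bn n. \<forall>V\<in>Bn n. U \<subseteq> V \<longrightarrow> al U V \<in> hom (Psi U) (fobj (P U V) (a V)) (a U)) \<and>
     (\<forall>U\<in>Bn n. al U U = cId (Psi U) (a U)) \<and>
     (\<forall>U\<in>Bn n. \<forall>V\<in>Bn n. \<forall>W\<in>Bn n. U \<subseteq> V \<longrightarrow> V \<subseteq> W \<longrightarrow>
        al U W = cComp (Psi U) (al U V) (farr (P U V) (al V W)))}"

definition lim_arr :: "nat \<Rightarrow> (nat set \<Rightarrow> ('o, 'm) cat) \<Rightarrow> (nat set \<Rightarrow> nat set \<Rightarrow> ('o, 'm, 'o, 'm) func) \<Rightarrow>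
    (((nat set \<Rightarrow> 'o) \<times> (nat set \<Rightarrow> nat set \<Rightarrow> 'm)) \<times>
     ((nat set \<Rightarrow> 'o) \<times> (nat set \<Rightarrow> nat set \<Rightarrow> 'm)) \<times> (nat set \<Rightarrow> 'm)) set" where
  "lim_arr n Psi P = {(x, y, g).
     x \<in> lim_obj n Psi P \<and> y \<in> lim_obj n Psi P \<and>
     (\<forall>U. U \<notin> Bn n \<longrightarrow> g U = undefined) \<and>
     (\<forall>U\<in>Bn n. g U \<in> hom (Psi U) (fst x U) (fst y U)) \<and>
     (\<forall>U\<in>Bn n. \<forall>V\<in>Bn n. U \<subseteq> V \<longrightarrow>
        cComp (Psi U) (g U) (snd x U V) = cComp (Psi U) (snd y U V) (farr (P U V) (g V)))}"

definition twolim :: "nat \<Rightarrow> (nat set \<Rightarrow> ('o, 'm) cat) \<Rightarrow> (nat set \<Rightarrow> nat set \<Rightarrow> ('o, 'm, 'o, 'm) func) \<Rightarrow>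
    ((nat set \<Rightarrow> 'o) \<times> (nat set \<Rightarrow> nat set \<Rightarrow> 'm),
     ((nat set \<Rightarrow> 'o) \<times> (nat set \<Rightarrow> nat set \<Rightarrow> 'm)) \<times>
     ((nat set \<Rightarrow> 'o) \<times> (nat set \<Rightarrow> nat set \<Rightarrow> 'm)) \<times> (nat set \<Rightarrow> 'm)) cat" where
  "twolim n Psi P = \<lparr>
     cObj = lim_obj n Psi P,
     cArr = lim_arr n Psi P,
     cDom = (\<lambda>(x, y, g). x),
     cCod = (\<lambda>(x, y, g). y),
     cId = (\<lambda>x. (x, x, \<lambda>U. if U \<in> Bn n then cId (Psi U) (fst x U) else undefined)),
     cComp = (\<lambda>(y, z, h) (x, y', g). (x, z, \<lambda>U. if U \<in> Bn n then cComp (Psi U) (h U) (g U) else undefined))\<rparr>"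

definition lim_fobj :: "nat \<Rightarrow> (nat set \<Rightarrow> ('o, 'm, 'o2, 'm2) func) \<Rightarrow>
    (nat set \<Rightarrow> 'o) \<times> (nat set \<Rightarrow> nat set \<Rightarrow> 'm) \<Rightarrow> (nat set \<Rightarrow> 'o2) \<times> (nat set \<Rightarrow> nat set \<Rightarrow> 'm2)" where
  "lim_fobj n theta = (\<lambda>(a, al).
     (\<lambda>U. if U \<in> Bn n then fobj (theta U) (a U) else undefined,
      \<lambda>U V. if U \<in> Bn n \<and> V \<in> Bn n \<and> U \<subseteq> V then farr (theta U) (al U V) else undefined))"

definition lim_func :: "nat \<Rightarrow> (nat set \<Rightarrow> ('o, 'm, 'o2, 'm2) func) \<Rightarrow>
    ((nat set \<Rightarrow> 'o) \<times> (nat set \<Rightarrow> nat set \<Rightarrow> 'm),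
     ((nat set \<Rightarrow> 'o) \<times> (nat set \<Rightarrow> nat set \<Rightarrow> 'm)) \<times>
     ((nat set \<Rightarrow> 'o) \<times> (nat set \<Rightarrow> nat set \<Rightarrow> 'm)) \<times> (nat set \<Rightarrow> 'm),
     (nat set \<Rightarrow> 'o2) \<times> (nat set \<Rightarrow> nat set \<Rightarrow> 'm2),
     ((nat set \<Rightarrow> 'o2) \<times> (nat set \<Rightarrow> nat set \<Rightarrow> 'm2)) \<times>
     ((nat set \<Rightarrow> 'o2) \<times> (nat set \<Rightarrow> nat set \<Rightarrow> 'm2)) \<times> (nat set \<Rightarrow> 'm2)) func" where
  "lim_func n theta = \<lparr>
     fobj = lim_fobj n theta,
     farr = (\<lambda>(x, y, g). (lim_fobj n theta x, lim_fobj n theta y,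
                          \<lambda>U. if U \<in> Bn n then farr (theta U) (g U) else undefined))\<rparr>"

end

theory Submission
  imports Defs
begin


lemma hom_iff: "f \<in> hom C x y \<longleftrightarrow> f \<in> cArr C \<and> cDom C f = x \<and> cCod C f = y"
  by (simp add: hom_def)

lemma homI[intro]: "f \<in> cArr C \<Longrightarrow> cDom C f = x \<Longrightarrow> cCod C f = y \<Longrightarrow> f \<in> hom C x y"
  by (simp add: hom_def)

lemma homD: "f \<in> hom C x y \<Longrightarrow> f \<in> cArr C" "f \<in> hom C x y \<Longrightarrow> cDom C f = x"
   "f \<in> hom C x y \<Longrightarrow> cCod C f = y"
  by (simp_all add: hom_def)

lemma cat_dom[simp]: "category C \<Longrightarrow> f \<in> cArr C \<Longrightarrow> cDom C f \<in> cObj C"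
  and cat_cod[simp]: "category C \<Longrightarrow> f \<in> cArr C \<Longrightarrow> cCod C f \<in> cObj C"
  by (auto simp: category_def)

lemma cat_comp[simp]:
  assumes "category C" "f \<in> cArr C" "g \<in> cArr C" "cCod C f = cDom C g"
  shows "cComp C g f \<in> cArr C" "cDom C (cComp C g f) = cDom C f" "cCod C (cComp C g f) = cCod C g"
  using assms unfolding category_def hom_def by blast+

lemma cat_id[simp]:
  assumes "category C" "x \<in> cObj C"
  shows "cId C x \<in> cArr C" "cDom C (cId C x) = x" "cCod C (cId C x) = x"
  using assms unfolding category_def hom_def by blast+

lemma cat_idl[simp]: "category C \<Longrightarrow> f \<in> cArr C \<Longrightarrow> cCod C f = y \<Longrightarrow> cComp C (cId C y) f = f"
  and cat_idr[simp]: "category C \<Longrightarrow> f \<in> cArr C \<Longrightarrow> cDom C f = x \<Longrightarrow> cComp C f (cId C x) = f"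
  unfolding category_def by blast+

lemma cat_assoc:
  "category C \<Longrightarrow> f \<in> cArr C \<Longrightarrow> g \<in> cArr C \<Longrightarrow> h \<in> cArr C \<Longrightarrow> cCod C f = cDom C g \<Longrightarrow>
   cCod C g = cDom C h \<Longrightarrow> cComp C h (cComp C g f) = cComp C (cComp C h g) f"
  unfolding category_def by blast

definition ginv :: "('o,'m) cat \<Rightarrow> 'm \<Rightarrow> 'm" where
  "ginv C f = (SOME g. g \<in> hom C (cCod C f) (cDom C f) \<and>
        cComp C g f = cId C (cDom C f) \<and> cComp C f g = cId C (cCod C f))"

lemma ginv_prop: assumes "c_iso C f"
  shows "ginv C f \<in> hom C (cCod C f) (cDom C f) \<and>
        cComp C (ginv C f) f = cId C (cDom C f) \<and> cComp C f (ginv C f) = cId C (cCod C f)"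
proof -
  from assms obtain g where "g \<in> hom C (cCod C f) (cDom C f) \<and>
        cComp C g f = cId C (cDom C f) \<and> cComp C f g = cId C (cCod C f)" unfolding c_iso_def by blast
  then show ?thesis unfolding ginv_def by (rule someI)
qed

lemma gpd_cat[simp]: "groupoid C \<Longrightarrow> category C" by (simp add: groupoid_def)
lemma gpd_iso: "groupoid C \<Longrightarrow> f \<in> cArr C \<Longrightarrow> c_iso C f" by (simp add: groupoid_def)

lemma iso_ginv:
  assumes "c_iso C f"
  shows "ginv C f \<in> cArr C" "cDom C (ginv C f) = cCod C f" "cCod C (ginv C f) = cDom C f"
    "cComp C (ginv C f) f = cId C (cDom C f)" "cComp C f (ginv C f) = cId C (cCod C f)"
  using ginv_prop[OF assms] by (auto simp: hom_def)

lemma gpd_ginv[simp]: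
  assumes "groupoid C" "f \<in> cArr C"
  shows "ginv C f \<in> cArr C" "cDom C (ginv C f) = cCod C f" "cCod C (ginv C f) = cDom C f"
    "cComp C (ginv C f) f = cId C (cDom C f)" "cComp C f (ginv C f) = cId C (cCod C f)"
  using iso_ginv[OF gpd_iso[OF assms]] by auto

lemma gpd_cancel1[simp]:
  assumes "groupoid C" "f \<in> cArr C" "h \<in> cArr C" "cDom C h = cDom C f"
  shows "cComp C (cComp C h (ginv C f)) f = h"
  using cat_assoc[of C f "ginv C f" h] assms by simp

lemma gpd_cancel2[simp]:
  assumes "groupoid C" "f \<in> cArr C" "h \<in> cArr C" "cDom C h = cCod C f"
  shows "cComp C (cComp C h f) (ginv C f) = h"
  using cat_assoc[of C "ginv C f" f h] assms by simp

lemma iso_cancel_right: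
  assumes "category C" "c_iso C i" "a \<in> cArr C" "b \<in> cArr C" "cDom C a = cCod C i" "cDom C b = cCod C i"
    "cComp C a i = cComp C b i"
  shows "a = b"
proof -
  note g = iso_ginv[OF assms(2)]
  have "i \<in> cArr C" using assms(2) by (simp add: c_iso_def)
  have 1: "a = cComp C (cComp C a i) (ginv C i)"
    using cat_assoc[of C "ginv C i" i a] assms g \<open>i \<in> cArr C\<close> by simp
  have 2: "b = cComp C (cComp C b i) (ginv C i)"
    using cat_assoc[of C "ginv C i" i b] assms g \<open>i \<in> cArr C\<close> by simp
  show ?thesis using 1 2 assms(7) by simp
qed

lemma iso_cancel_left:
  assumes "category C" "c_iso C i" "a \<in> cArr C" "b \<in> cArr C" "cCod C a = cDom C i" "cCod C b = cDom C i"
    "cComp C i a = cComp C i b"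
  shows "a = b"
proof -
  note g = iso_ginv[OF assms(2)]
  have "i \<in> cArr C" using assms(2) by (simp add: c_iso_def)
  have 1: "a = cComp C (ginv C i) (cComp C i a)"
    using cat_assoc[of C a i "ginv C i"] assms g \<open>i \<in> cArr C\<close> by simp
  have 2: "b = cComp C (ginv C i) (cComp C i b)"
    using cat_assoc[of C b i "ginv C i"] assms g \<open>i \<in> cArr C\<close> by simp
  show ?thesis using 1 2 assms(7) by simp
qed

lemma ginv_unique:
  assumes "category C" "c_iso C f" "g \<in> cArr C" "cDom C g = cCod C f" "cComp C g f = cId C (cDom C f)"
  shows "g = ginv C f"
proof -
  note i = iso_ginv[OF assms(2)]
  have "f \<in> cArr C" using assms(2) by (simp add: c_iso_def)
  show ?thesis
    apply (rule iso_cancel_right[OF assms(1,2)])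
    using assms i \<open>f \<in> cArr C\<close> by auto
qed

lemma fun_arr[simp]:
  assumes "is_functor C D F" "f \<in> cArr C"
  shows "farr F f \<in> cArr D" "cDom D (farr F f) = fobj F (cDom C f)" "cCod D (farr F f) = fobj F (cCod C f)"
  using assms unfolding is_functor_def hom_def by blast+

lemma fun_obj[simp]: "is_functor C D F \<Longrightarrow> x \<in> cObj C \<Longrightarrow> fobj F x \<in> cObj D"
  unfolding is_functor_def by blast

lemma fun_id[simp]: "is_functor C D F \<Longrightarrow> x \<in> cObj C \<Longrightarrow> farr F (cId C x) = cId D (fobj F x)"
  unfolding is_functor_def by blast

lemma fun_comp[simp]: "is_functor C D F \<Longrightarrow> f \<in> cArr C \<Longrightarrow> g \<in> cArr C \<Longrightarrow> cCod C f = cDom C g \<Longrightarrow>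
   farr F (cComp C g f) = cComp D (farr F g) (farr F f)"
  unfolding is_functor_def by blast

lemma fun_ginv[simp]:
  assumes "is_functor C D F" "groupoid C" "groupoid D" "f \<in> cArr C"
  shows "farr F (ginv C f) = ginv D (farr F f)"
proof -
  have "c_iso D (farr F f)" using assms by (simp add: gpd_iso)
  have "cComp D (farr F (ginv C f)) (farr F f) = cId D (cDom D (farr F f))"
    using fun_comp[of C D F f "ginv C f"] assms by simp
  then show ?thesis using assms
    by (intro ginv_unique) (auto simp: gpd_iso)
qed

lemma gpd_ginv_comp[simp]:
  assumes "groupoid C" "f \<in> cArr C" "g \<in> cArr C" "cCod C f = cDom C g"
  shows "ginv C (cComp C g f) = cComp C (ginv C f) (ginv C g)"
proof -
  have c: "category C" using assms by simp
  have "cComp C (cComp C (ginv C f) (ginv C g)) (cComp C g f) = cId C (cDom C (cComp C g f))"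
    using assms c by (simp add: cat_assoc)
  then show ?thesis using assms c
    by (intro ginv_unique[symmetric]) (auto simp: gpd_iso)
qed

lemma gpd_ginv_id[simp]:
  assumes "groupoid C" "x \<in> cObj C"
  shows "ginv C (cId C x) = cId C x"
proof -
  have c: "category C" using assms by simp
  show ?thesis using assms c
    by (intro ginv_unique[symmetric]) (auto simp: gpd_iso)
qed




definition faithfulF where
  "faithfulF C F \<longleftrightarrow> (\<forall>f\<in>cArr C. \<forall>f'\<in>cArr C. cDom C f = cDom C f' \<and> cCod C f = cCod C f' \<and>
      farr F f = farr F f' \<longrightarrow> f = f')"
definition fullF where
  "fullF C D F \<longleftrightarrow> (\<forall>x\<in>cObj C. \<forall>y\<in>cObj C. \<forall>h\<in>hom D (fobj F x) (fobj F y). \<exists>f\<in>hom C x y. farr F f = h)"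
definition esF where
  "esF C D F \<longleftrightarrow> (\<forall>y\<in>cObj D. \<exists>x\<in>cObj C. \<exists>e. e \<in> hom D (fobj F x) y)"

lemma equivalence_ff:
  assumes gC: "groupoid C" and gD: "groupoid D" and eq: "equivalence C D F"
  shows "faithfulF C F" "fullF C D F" "esF C D F"
proof -
  have cC: "category C" and cD: "category D" using gC gD by auto
  from eq obtain G eta eps where F: "is_functor C D F" and G: "is_functor D C G"
    and ni1: "nat_iso C C id_func (func_comp G F) eta" and ni2: "nat_iso D D (func_comp F G) id_func eps"
    unfolding equivalence_def by blast
  have eta: "\<And>x. x \<in> cObj C \<Longrightarrow> eta x \<in> cArr C \<and> cDom C (eta x) = x \<and> cCod C (eta x) = fobj G (fobj F x)"
    using ni1 unfolding nat_iso_def hom_def by (simp add: id_func_def func_comp_def)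
  have etan: "\<And>f. f \<in> cArr C \<Longrightarrow> cComp C (eta (cCod C f)) f = cComp C (farr G (farr F f)) (eta (cDom C f))"
    using ni1 unfolding nat_iso_def by (simp add: id_func_def func_comp_def)
  have eps: "\<And>y. y \<in> cObj D \<Longrightarrow> eps y \<in> cArr D \<and> cDom D (eps y) = fobj F (fobj G y) \<and> cCod D (eps y) = y"
    using ni2 unfolding nat_iso_def hom_def by (simp add: id_func_def func_comp_def)
  have epsn: "\<And>k. k \<in> cArr D \<Longrightarrow> cComp D (eps (cCod D k)) (farr F (farr G k)) = cComp D k (eps (cDom D k))"
    using ni2 unfolding nat_iso_def by (simp add: id_func_def func_comp_def)
  show ff: "faithfulF C F" unfolding faithfulF_def
  proof (intro ballI impI)
    fix f f' assume f: "f \<in> cArr C" "f' \<in> cArr C" and h: "cDom C f = cDom C f' \<and> cCod C f = cCod C f' \<and> farr F f = farr F f'"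
    have e1: "cComp C (eta (cCod C f)) f = cComp C (farr G (farr F f)) (eta (cDom C f))" by (rule etan[OF f(1)])
    have e2: "cComp C (eta (cCod C f')) f' = cComp C (farr G (farr F f')) (eta (cDom C f'))" by (rule etan[OF f(2)])
    have "cComp C (eta (cCod C f)) f = cComp C (eta (cCod C f)) f'"
      using e1 e2 h by simp
    moreover have "c_iso C (eta (cCod C f))" using eta[of "cCod C f"] f cC gC by (simp add: gpd_iso)
    moreover have "cDom C (eta (cCod C f)) = cCod C f" using eta[of "cCod C f"] f cC by simp
    moreover have "cDom C (eta (cCod C f)) = cCod C f'" using calculation h by simp
    ultimately show "f = f'"
      using f iso_cancel_left[OF cC, of "eta (cCod C f)" f f'] by metis
  qed
  have Gf: "\<And>k k'. k \<in> cArr D \<Longrightarrow> k' \<in> cArr D \<Longrightarrow> cDom D k = cDom D k' \<Longrightarrow> cCod D k = cCod D k' \<Longrightarrow>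
      farr G k = farr G k' \<Longrightarrow> k = k'"
  proof -
    fix k k' assume k: "k \<in> cArr D" "k' \<in> cArr D" and h: "cDom D k = cDom D k'" "cCod D k = cCod D k'"
      "farr G k = farr G k'"
    have e1: "cComp D (eps (cCod D k)) (farr F (farr G k)) = cComp D k (eps (cDom D k))" by (rule epsn[OF k(1)])
    have e2: "cComp D (eps (cCod D k')) (farr F (farr G k')) = cComp D k' (eps (cDom D k'))" by (rule epsn[OF k(2)])
    have "cComp D k (eps (cDom D k)) = cComp D k' (eps (cDom D k))"
      using e1 e2 h by simp
    moreover have "c_iso D (eps (cDom D k))" using eps[of "cDom D k"] k cD gD by (simp add: gpd_iso)
    moreover have "cCod D (eps (cDom D k)) = cDom D k" using eps[of "cDom D k"] k cD by simp
    moreover have "cCod D (eps (cDom D k)) = cDom D k'" using calculation h by simp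
    ultimately show "k = k'"
      using k iso_cancel_right[OF cD, of "eps (cDom D k)" k k'] by metis
  qed
  show "fullF C D F" unfolding fullF_def
  proof (intro ballI)
    fix x y h assume x: "x \<in> cObj C" and y: "y \<in> cObj C" and h: "h \<in> hom D (fobj F x) (fobj F y)"
    have h': "h \<in> cArr D" "cDom D h = fobj F x" "cCod D h = fobj F y" using h by (auto simp: hom_def)
    note ex = eta[OF x] and ey = eta[OF y]
    define f where "f = cComp C (ginv C (eta y)) (cComp C (farr G h) (eta x))"
    have fa: "f \<in> cArr C" "cDom C f = x" "cCod C f = y" unfolding f_def using ex ey h' G gC by auto
    have "cComp C (farr G (farr F f)) (eta x) = cComp C (eta y) f"
      using etan[OF fa(1)] fa by simp
    also have "\<dots> = cComp C (farr G h) (eta x)"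
      unfolding f_def using ex ey h' G gC cat_assoc[of C "cComp C (farr G h) (eta x)" "ginv C (eta y)" "eta y"]
      by simp
    finally have eq: "cComp C (farr G (farr F f)) (eta x) = cComp C (farr G h) (eta x)" .
    have i: "c_iso C (eta x)" using ex gC by (simp add: gpd_iso)
    have a1: "farr G (farr F f) \<in> cArr C" "cDom C (farr G (farr F f)) = cCod C (eta x)"
      using ex fa F G by auto
    have a2: "farr G h \<in> cArr C" "cDom C (farr G h) = cCod C (eta x)"
      using ex h' G by auto
    have "farr G (farr F f) = farr G h"
      using iso_cancel_right[OF cC i a1(1) a2(1) a1(2) a2(2) eq] .
    then have "farr F f = h" using Gf[of "farr F f" h] fa h' F by simp
    then show "\<exists>f\<in>hom C x y. farr F f = h" using fa by (auto simp: hom_def)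
  qed
  show "esF C D F" unfolding esF_def
  proof
    fix y assume y: "y \<in> cObj D"
    show "\<exists>x\<in>cObj C. \<exists>e. e \<in> hom D (fobj F x) y"
      using eps[OF y] G y by (intro bexI[of _ "fobj G y"] exI[of _ "eps y"]) (auto simp: hom_def)
  qed
qed

lemma ffD: "faithfulF C F \<Longrightarrow> f \<in> hom C x y \<Longrightarrow> f' \<in> hom C x y \<Longrightarrow> farr F f = farr F f' \<Longrightarrow> f = f'"
  unfolding faithfulF_def hom_def by auto

lemma ff_es_equivalence:
  assumes gC: "groupoid C" and gD: "groupoid D" and F: "is_functor C D F"
    and ff: "faithfulF C F" and fu: "fullF C D F" and es: "esF C D F"
  shows "equivalence C D F"
proof -
  have cC: "category C" and cD: "category D" using gC gD by auto
  define G0 where "G0 y = (SOME x. x \<in> cObj C \<and> (\<exists>e. e \<in> hom D (fobj F x) y))" for y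
  define e where "e y = (SOME e. e \<in> hom D (fobj F (G0 y)) y)" for y
  have G0: "G0 y \<in> cObj C \<and> e y \<in> hom D (fobj F (G0 y)) y" if y: "y \<in> cObj D" for y
  proof -
    from es y obtain x e0 where "x \<in> cObj C" "e0 \<in> hom D (fobj F x) y" unfolding esF_def by blast
    then have "G0 y \<in> cObj C \<and> (\<exists>e. e \<in> hom D (fobj F (G0 y)) y)"
      unfolding G0_def using someI[of "\<lambda>x. x \<in> cObj C \<and> (\<exists>e. e \<in> hom D (fobj F x) y)" x] by blast
    then show ?thesis unfolding e_def by (auto intro: someI_ex)
  qed
  have G0o: "y \<in> cObj D \<Longrightarrow> G0 y \<in> cObj C" for y using G0 by blast
  have eA: "e y \<in> cArr D" "cDom D (e y) = fobj F (G0 y)" "cCod D (e y) = y" if "y \<in> cObj D" for y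
    using G0[OF that] by (auto simp: hom_def)
  define G1 where "G1 k = (SOME f. f \<in> hom C (G0 (cDom D k)) (G0 (cCod D k)) \<and>
      farr F f = cComp D (ginv D (e (cCod D k))) (cComp D k (e (cDom D k))))" for k
  have G1: "G1 k \<in> hom C (G0 (cDom D k)) (G0 (cCod D k)) \<and>
      farr F (G1 k) = cComp D (ginv D (e (cCod D k))) (cComp D k (e (cDom D k)))" if k: "k \<in> cArr D" for k
  proof -
    have "cComp D (ginv D (e (cCod D k))) (cComp D k (e (cDom D k))) \<in> hom D (fobj F (G0 (cDom D k))) (fobj F (G0 (cCod D k)))"
      using k eA[of "cDom D k"] eA[of "cCod D k"] gD by (auto simp: hom_def)
    then obtain f where "f \<in> hom C (G0 (cDom D k)) (G0 (cCod D k)) \<and>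
      farr F f = cComp D (ginv D (e (cCod D k))) (cComp D k (e (cDom D k)))"
      using fu G0o k gD unfolding fullF_def by (meson cat_cod cat_dom gpd_cat)
    then show ?thesis unfolding G1_def by (rule someI)
  qed
  have G1A: "G1 k \<in> cArr C" "cDom C (G1 k) = G0 (cDom D k)" "cCod C (G1 k) = G0 (cCod D k)"
    "farr F (G1 k) = cComp D (ginv D (e (cCod D k))) (cComp D k (e (cDom D k)))" if "k \<in> cArr D" for k
    using G1[OF that] by (auto simp: hom_def)
  define G where "G = \<lparr>fobj = G0, farr = G1\<rparr>"
  have GF: "is_functor D C G" unfolding is_functor_def G_def
  proof (simp, intro conjI ballI impI)
    fix y assume y: "y \<in> cObj D"
    show "G0 y \<in> cObj C" using G0o[OF y] .
  next
    fix k assume k: "k \<in> cArr D"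
    show "G1 k \<in> hom C (G0 (cDom D k)) (G0 (cCod D k))" using G1[OF k] by blast
  next
    fix y assume y: "y \<in> cObj D"
    have "farr F (G1 (cId D y)) = farr F (cId C (G0 y))"
      using G1A[of "cId D y"] y cD eA[OF y] gD F G0o[OF y] by simp
    then show "G1 (cId D y) = cId C (G0 y)"
      using G1A[of "cId D y"] y cD cC G0o[OF y] by (intro ffD[OF ff]) (auto simp: hom_def)
  next
    fix k1 k2 assume k: "k1 \<in> cArr D" "k2 \<in> cArr D" "cCod D k1 = cDom D k2"
    have "farr F (G1 (cComp D k2 k1)) = farr F (cComp C (G1 k2) (G1 k1))"
      using G1A[of "cComp D k2 k1"] G1A[OF k(1)] G1A[OF k(2)] k cD eA[of "cDom D k1"] eA[of "cCod D k1"]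
        eA[of "cCod D k2"] gD F by (simp add: cat_assoc)
    then show "G1 (cComp D k2 k1) = cComp C (G1 k2) (G1 k1)"
      using G1A[of "cComp D k2 k1"] G1A[OF k(1)] G1A[OF k(2)] k cD cC
      by (intro ffD[OF ff]) (auto simp: hom_def)
  qed
  define eta where "eta x = (SOME f. f \<in> hom C x (G0 (fobj F x)) \<and> farr F f = ginv D (e (fobj F x)))" for x
  have eta: "eta x \<in> hom C x (G0 (fobj F x)) \<and> farr F (eta x) = ginv D (e (fobj F x))" if x: "x \<in> cObj C" for x
  proof -
    have Fx: "fobj F x \<in> cObj D" using F x by simp
    have "ginv D (e (fobj F x)) \<in> hom D (fobj F x) (fobj F (G0 (fobj F x)))"
      using eA[OF Fx] gD by (auto simp: hom_def)
    then obtain f where "f \<in> hom C x (G0 (fobj F x)) \<and> farr F f = ginv D (e (fobj F x))"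
      using fu G0o[OF Fx] x unfolding fullF_def by blast
    then show ?thesis unfolding eta_def by (rule someI)
  qed
  have etaA: "eta x \<in> cArr C" "cDom C (eta x) = x" "cCod C (eta x) = G0 (fobj F x)"
     "farr F (eta x) = ginv D (e (fobj F x))" if "x \<in> cObj C" for x
    using eta[OF that] by (auto simp: hom_def)
  have N1: "nat_iso C C id_func (func_comp G F) eta"
    unfolding nat_iso_def
  proof (intro conjI ballI)
    fix x assume x: "x \<in> cObj C"
    show "eta x \<in> hom C (fobj id_func x) (fobj (func_comp G F) x)"
      using eta[OF x] by (simp add: id_func_def func_comp_def G_def)
    show "c_iso C (eta x)" using etaA[OF x] gC by (simp add: gpd_iso)
  next
    fix f assume f: "f \<in> cArr C"
    have Fx: "fobj F (cDom C f) \<in> cObj D" "fobj F (cCod C f) \<in> cObj D" using F f cC by auto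
    have "farr F (cComp C (eta (cCod C f)) f) = farr F (cComp C (G1 (farr F f)) (eta (cDom C f)))"
      using f cC F etaA[of "cDom C f"] etaA[of "cCod C f"] G1A[of "farr F f"] eA[OF Fx(1)] eA[OF Fx(2)] gD
      by (simp add: cat_assoc)
    then show "cComp C (eta (cCod C f)) (farr id_func f) = cComp C (farr (func_comp G F) f) (eta (cDom C f))"
      unfolding id_func_def func_comp_def G_def
      using f cC F etaA[of "cDom C f"] etaA[of "cCod C f"] G1A[of "farr F f"]
      by (intro ffD[OF ff]) (auto simp: hom_def)
  qed
  have N2: "nat_iso D D (func_comp F G) id_func e"
    unfolding nat_iso_def
  proof (intro conjI ballI)
    fix y assume y: "y \<in> cObj D"
    show "e y \<in> hom D (fobj (func_comp F G) y) (fobj id_func y)"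
      using G0[OF y] by (simp add: id_func_def func_comp_def G_def)
    show "c_iso D (e y)" using eA[OF y] gD by (simp add: gpd_iso)
  next
    fix k assume k: "k \<in> cArr D"
    show "cComp D (e (cCod D k)) (farr (func_comp F G) k) = cComp D (farr id_func k) (e (cDom D k))"
      unfolding id_func_def func_comp_def G_def
      using k cD G1A[OF k] eA[of "cDom D k"] eA[of "cCod D k"] gD by (simp add: cat_assoc)
  qed
  show ?thesis unfolding equivalence_def using F GF N1 N2 by blast
qed




definition topS :: "nat \<Rightarrow> nat set \<Rightarrow> bool" where
  "topS n S \<longleftrightarrow> S \<in> Bn n \<and> n - 3 \<le> card S"
definition maxl :: "nat \<Rightarrow> nat set \<Rightarrow> bool" where
  "maxl n M \<longleftrightarrow> M \<in> Bn n \<and> card M = n - 1"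
definition mx :: "nat \<Rightarrow> nat set \<Rightarrow> nat set" where
  "mx n U = (SOME M. maxl n M \<and> U \<subseteq> M)"

lemma Bn_iff: "U \<in> Bn n \<longleftrightarrow> U \<subset> {1..n}" by (simp add: Bn_def)

lemma Bn_fin: "U \<in> Bn n \<Longrightarrow> finite U" "U \<in> Bn n \<Longrightarrow> U \<subseteq> {1..n}" "U \<in> Bn n \<Longrightarrow> card U < n"
proof -
  assume "U \<in> Bn n"
  then have p: "U \<subset> {1..n}" by (simp add: Bn_def)
  then show "U \<subseteq> {1..n}" by blast
  show "finite U" using p finite_subset[of U "{1..n}"] by blast
  show "card U < n" using psubset_card_mono[OF _ p] by simp
qed

lemma Bn_sub: "V \<in> Bn n \<Longrightarrow> U \<subseteq> V \<Longrightarrow> U \<in> Bn n"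
  unfolding Bn_def by blast

lemma compl_card: "A \<subseteq> {1..n} \<Longrightarrow> card A = n - card ({1..n} - A)"
proof -
  assume "A \<subseteq> {1..n}"
  then have "card ({1..n} - A) = n - card A" by (simp add: card_Diff_subset finite_subset)
  moreover have "card A \<le> n" using \<open>A \<subseteq> {1..n}\<close> card_mono[of "{1..n}" A] by simp
  ultimately show ?thesis by simp
qed

lemma maxl_compl: "maxl n M \<Longrightarrow> card ({1..n} - M) \<le> 1"
proof -
  assume "maxl n M"
  then have "M \<subseteq> {1..n}" "card M = n - 1" unfolding maxl_def Bn_def by auto
  moreover have "card ({1..n} - M) = n - card M" using \<open>M \<subseteq> {1..n}\<close> by (simp add: card_Diff_subset finite_subset)
  ultimately show ?thesis by simp
qed

lemma mx: assumes "U \<in> Bn n" shows "maxl n (mx n U) \<and> U \<subseteq> mx n U"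
proof -
  from assms obtain i where i: "i \<in> {1..n}" "i \<notin> U" unfolding Bn_def by blast
  let ?M = "{1..n} - {i}"
  have "maxl n ?M \<and> U \<subseteq> ?M"
    using i assms unfolding maxl_def Bn_def by auto
  then show ?thesis unfolding mx_def by (rule someI)
qed

lemma maxl_top: "maxl n M \<Longrightarrow> topS n M" unfolding maxl_def topS_def by auto

lemma maxl_Bn: "maxl n M \<Longrightarrow> M \<in> Bn n" unfolding maxl_def by auto
lemma topS_Bn: "topS n M \<Longrightarrow> M \<in> Bn n" unfolding topS_def by auto

lemma topS_up: "topS n V \<Longrightarrow> V \<subseteq> W \<Longrightarrow> W \<in> Bn n \<Longrightarrow> topS n W"
  unfolding topS_def using card_mono[of W V] Bn_fin(1)[of W n] by auto

lemma card_lower: assumes "A \<subseteq> {1..n}" "card ({1..n} - A) \<le> k" shows "n - k \<le> card A"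
  using compl_card[OF assms(1)] assms(2) by simp

lemma maxl_int2: assumes "maxl n M" "maxl n M'" shows "topS n (M \<inter> M')"
proof -
  have s: "M \<inter> M' \<subseteq> {1..n}" "M \<inter> M' \<in> Bn n" using assms unfolding maxl_def Bn_def by auto
  have "{1..n} - (M \<inter> M') = ({1..n} - M) \<union> ({1..n} - M')" by blast
  then have "card ({1..n} - (M \<inter> M')) \<le> 2"
    using card_Un_le[of "{1..n} - M" "{1..n} - M'"] maxl_compl[OF assms(1)] maxl_compl[OF assms(2)] by simp
  then have "n - 2 \<le> card (M \<inter> M')" using card_lower[OF s(1)] by simp
  then show ?thesis using s unfolding topS_def by simp
qed

lemma maxl_int3: assumes "maxl n M" "maxl n M'" "maxl n M''" shows "topS n (M \<inter> M' \<inter> M'')"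
proof -
  have s: "M \<inter> M' \<inter> M'' \<subseteq> {1..n}" "M \<inter> M' \<inter> M'' \<in> Bn n" using assms unfolding maxl_def Bn_def by auto
  have "{1..n} - (M \<inter> M' \<inter> M'') = ({1..n} - M) \<union> ({1..n} - M') \<union> ({1..n} - M'')" by blast
  then have "card ({1..n} - (M \<inter> M' \<inter> M'')) \<le> 3"
    using card_Un_le[of "({1..n} - M) \<union> ({1..n} - M')" "{1..n} - M''"]
      card_Un_le[of "{1..n} - M" "{1..n} - M'"] maxl_compl[OF assms(1)] maxl_compl[OF assms(2)]
      maxl_compl[OF assms(3)] by simp
  then have "n - 3 \<le> card (M \<inter> M' \<inter> M'')" using card_lower[OF s(1)] by simp
  then show ?thesis using s unfolding topS_def by simp
qed




lemma sq_comp: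
  assumes C: "category C"
    and arr: "a \<in> cArr C" "g1 \<in> cArr C" "b \<in> cArr C" "g2 \<in> cArr C" "h1 \<in> cArr C" "c \<in> cArr C" "h2 \<in> cArr C"
    and d: "cCod C a = cDom C g1" "cCod C g2 = cDom C b" "cCod C g1 = cDom C h1" "cCod C h2 = cDom C c"
       "cCod C b = cDom C h1" "cCod C g2 = cDom C h2"
    and e1: "cComp C g1 a = cComp C b g2" and e2: "cComp C h1 b = cComp C c h2"
  shows "cComp C (cComp C h1 g1) a = cComp C c (cComp C h2 g2)"
proof -
  have "cComp C (cComp C h1 g1) a = cComp C h1 (cComp C g1 a)" using cat_assoc[OF C arr(1,2,5) d(1,3)] by simp
  also have "\<dots> = cComp C h1 (cComp C b g2)" using e1 by simp
  also have "\<dots> = cComp C (cComp C h1 b) g2" using cat_assoc[OF C arr(4,3,5) d(2,5)] by simp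
  also have "\<dots> = cComp C (cComp C c h2) g2" using e2 by simp
  also have "\<dots> = cComp C c (cComp C h2 g2)" using cat_assoc[OF C arr(4,7,6) d(6,4)] by simp
  finally show ?thesis .
qed

lemma sq_inv:
  assumes C: "groupoid C"
    and arr: "a \<in> cArr C" "g1 \<in> cArr C" "b \<in> cArr C" "g2 \<in> cArr C"
    and d: "cCod C a = cDom C g1" "cCod C g2 = cDom C b" "cCod C b = cCod C g1" "cDom C a = cDom C g2"
    and e1: "cComp C g1 a = cComp C b g2"
  shows "cComp C (ginv C g1) b = cComp C a (ginv C g2)"
proof -
  have "cComp C (ginv C g1) b = cComp C (ginv C g1) (cComp C (cComp C b g2) (ginv C g2))"
    using C arr d by simp
  also have "\<dots> = cComp C (ginv C g1) (cComp C (cComp C g1 a) (ginv C g2))" using e1 by simp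
  also have "\<dots> = cComp C a (ginv C g2)" using C arr d by (simp add: cat_assoc)
  finally show ?thesis .
qed

locale gps =
  fixes n :: nat and Psi :: "nat set \<Rightarrow> ('o, 'm) cat" and P :: "nat set \<Rightarrow> nat set \<Rightarrow> ('o, 'm, 'o, 'm) func"
  assumes psh: "gpd_presheaf n Psi P"
begin

lemma psh1: "\<forall>U\<in>Bn n. groupoid (Psi U)"
  and psh2: "\<forall>U\<in>Bn n. \<forall>V\<in>Bn n. U \<subseteq> V \<longrightarrow> is_functor (Psi V) (Psi U) (P U V)"
  and psh3: "\<forall>U\<in>Bn n. (\<forall>x\<in>cObj (Psi U). fobj (P U U) x = x) \<and> (\<forall>f\<in>cArr (Psi U). farr (P U U) f = f)"
  and psh4: "\<forall>U\<in>Bn n. \<forall>V\<in>Bn n. \<forall>W\<in>Bn n. U \<subseteq> V \<longrightarrow> V \<subseteq> W \<longrightarrow>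
        (\<forall>x\<in>cObj (Psi W). fobj (P U V) (fobj (P V W) x) = fobj (P U W) x) \<and>
        (\<forall>f\<in>cArr (Psi W). farr (P U V) (farr (P V W) f) = farr (P U W) f)"
  using psh unfolding gpd_presheaf_def by auto

lemma gpd[simp]: "U \<in> Bn n \<Longrightarrow> groupoid (Psi U)"
  using psh1 by blast

lemma Pf: "U \<in> Bn n \<Longrightarrow> V \<in> Bn n \<Longrightarrow> U \<subseteq> V \<Longrightarrow> is_functor (Psi V) (Psi U) (P U V)"
  using psh2 by blast

lemma P_arr[simp]:
  assumes "U \<in> Bn n" "V \<in> Bn n" "U \<subseteq> V" "f \<in> cArr (Psi V)"
  shows "farr (P U V) f \<in> cArr (Psi U)" "cDom (Psi U) (farr (P U V) f) = fobj (P U V) (cDom (Psi V) f)"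
    "cCod (Psi U) (farr (P U V) f) = fobj (P U V) (cCod (Psi V) f)"
  using fun_arr[OF Pf[OF assms(1-3)] assms(4)] by blast+

lemma P_obj[simp]: "U \<in> Bn n \<Longrightarrow> V \<in> Bn n \<Longrightarrow> U \<subseteq> V \<Longrightarrow> x \<in> cObj (Psi V) \<Longrightarrow> fobj (P U V) x \<in> cObj (Psi U)"
  using fun_obj[OF Pf] by blast

lemma P_id[simp]: "U \<in> Bn n \<Longrightarrow> V \<in> Bn n \<Longrightarrow> U \<subseteq> V \<Longrightarrow> x \<in> cObj (Psi V) \<Longrightarrow>
   farr (P U V) (cId (Psi V) x) = cId (Psi U) (fobj (P U V) x)"
  using fun_id[OF Pf] by blast

lemma P_comp[simp]: "U \<in> Bn n \<Longrightarrow> V \<in> Bn n \<Longrightarrow> U \<subseteq> V \<Longrightarrow> f \<in> cArr (Psi V) \<Longrightarrow> g \<in> cArr (Psi V) \<Longrightarrow>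
   cCod (Psi V) f = cDom (Psi V) g \<Longrightarrow>
   farr (P U V) (cComp (Psi V) g f) = cComp (Psi U) (farr (P U V) g) (farr (P U V) f)"
  using fun_comp[OF Pf] by blast

lemma P_ginv[simp]: "U \<in> Bn n \<Longrightarrow> V \<in> Bn n \<Longrightarrow> U \<subseteq> V \<Longrightarrow> f \<in> cArr (Psi V) \<Longrightarrow>
   farr (P U V) (ginv (Psi V) f) = ginv (Psi U) (farr (P U V) f)"
  using fun_ginv[OF Pf] by simp

lemma P_PP[simp]:
  "U \<in> Bn n \<Longrightarrow> V \<in> Bn n \<Longrightarrow> W \<in> Bn n \<Longrightarrow> U \<subseteq> V \<Longrightarrow> V \<subseteq> W \<Longrightarrow> f \<in> cArr (Psi W) \<Longrightarrow>
    farr (P U V) (farr (P V W) f) = farr (P U W) f"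
  "U \<in> Bn n \<Longrightarrow> V \<in> Bn n \<Longrightarrow> W \<in> Bn n \<Longrightarrow> U \<subseteq> V \<Longrightarrow> V \<subseteq> W \<Longrightarrow> x \<in> cObj (Psi W) \<Longrightarrow>
    fobj (P U V) (fobj (P V W) x) = fobj (P U W) x"
  using psh4 by blast+

lemma P_UU[simp]: "U \<in> Bn n \<Longrightarrow> x \<in> cObj (Psi U) \<Longrightarrow> fobj (P U U) x = x"
  "U \<in> Bn n \<Longrightarrow> f \<in> cArr (Psi U) \<Longrightarrow> farr (P U U) f = f"
  using psh3 by blast+

lemma lobj_conj:
  assumes "x \<in> lim_obj n Psi P"
  shows "(\<forall>U. U \<notin> Bn n \<longrightarrow> fst x U = undefined) \<and>
     (\<forall>U V. \<not> (U \<in> Bn n \<and> V \<in> Bn n \<and> U \<subseteq> V) \<longrightarrow> snd x U V = undefined) \<and>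
     (\<forall>U\<in>Bn n. fst x U \<in> cObj (Psi U)) \<and>
     (\<forall>U\<in>Bn n. \<forall>V\<in>Bn n. U \<subseteq> V \<longrightarrow> snd x U V \<in> hom (Psi U) (fobj (P U V) (fst x V)) (fst x U)) \<and>
     (\<forall>U\<in>Bn n. snd x U U = cId (Psi U) (fst x U)) \<and>
     (\<forall>U\<in>Bn n. \<forall>V\<in>Bn n. \<forall>W\<in>Bn n. U \<subseteq> V \<longrightarrow> V \<subseteq> W \<longrightarrow>
        snd x U W = cComp (Psi U) (snd x U V) (farr (P U V) (snd x V W)))"
proof -
  obtain a al where x: "x = (a, al)" by (cases x)
  show ?thesis using assms unfolding x lim_obj_def mem_Collect_eq prod.case fst_conv snd_conv .
qed

lemma lobj:
  assumes "x \<in> lim_obj n Psi P"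
  shows "U \<in> Bn n \<Longrightarrow> fst x U \<in> cObj (Psi U)"
   "U \<in> Bn n \<Longrightarrow> V \<in> Bn n \<Longrightarrow> U \<subseteq> V \<Longrightarrow> snd x U V \<in> cArr (Psi U)"
   "U \<in> Bn n \<Longrightarrow> V \<in> Bn n \<Longrightarrow> U \<subseteq> V \<Longrightarrow> cDom (Psi U) (snd x U V) = fobj (P U V) (fst x V)"
   "U \<in> Bn n \<Longrightarrow> V \<in> Bn n \<Longrightarrow> U \<subseteq> V \<Longrightarrow> cCod (Psi U) (snd x U V) = fst x U"
   "U \<in> Bn n \<Longrightarrow> snd x U U = cId (Psi U) (fst x U)"
   "U \<notin> Bn n \<Longrightarrow> fst x U = undefined"
proof -
  note H = lobj_conj[OF assms]
  have h1: "\<forall>U. U \<notin> Bn n \<longrightarrow> fst x U = undefined" using H by (rule conjunct1)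
  have h3: "\<forall>U\<in>Bn n. fst x U \<in> cObj (Psi U)" using H by (elim conjE)
  have h4: "\<forall>U\<in>Bn n. \<forall>V\<in>Bn n. U \<subseteq> V \<longrightarrow> snd x U V \<in> hom (Psi U) (fobj (P U V) (fst x V)) (fst x U)"
    using H by (elim conjE)
  have h5: "\<forall>U\<in>Bn n. snd x U U = cId (Psi U) (fst x U)" using H by (elim conjE)
  show "U \<in> Bn n \<Longrightarrow> fst x U \<in> cObj (Psi U)" using h3 by blast
  show "U \<in> Bn n \<Longrightarrow> V \<in> Bn n \<Longrightarrow> U \<subseteq> V \<Longrightarrow> snd x U V \<in> cArr (Psi U)"
    using h4 by (auto simp: hom_def)
  show "U \<in> Bn n \<Longrightarrow> V \<in> Bn n \<Longrightarrow> U \<subseteq> V \<Longrightarrow> cDom (Psi U) (snd x U V) = fobj (P U V) (fst x V)"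
    using h4 by (auto simp: hom_def)
  show "U \<in> Bn n \<Longrightarrow> V \<in> Bn n \<Longrightarrow> U \<subseteq> V \<Longrightarrow> cCod (Psi U) (snd x U V) = fst x U"
    using h4 by (auto simp: hom_def)
  show "U \<in> Bn n \<Longrightarrow> snd x U U = cId (Psi U) (fst x U)" using h5 by blast
  show "U \<notin> Bn n \<Longrightarrow> fst x U = undefined" using h1 by blast
qed

lemma lobj_coc:
  assumes "x \<in> lim_obj n Psi P" "U \<in> Bn n" "V \<in> Bn n" "W \<in> Bn n" "U \<subseteq> V" "V \<subseteq> W"
  shows "snd x U W = cComp (Psi U) (snd x U V) (farr (P U V) (snd x V W))"
proof -
  have h6: "\<forall>U\<in>Bn n. \<forall>V\<in>Bn n. \<forall>W\<in>Bn n. U \<subseteq> V \<longrightarrow> V \<subseteq> W \<longrightarrow>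
        snd x U W = cComp (Psi U) (snd x U V) (farr (P U V) (snd x V W))" using lobj_conj[OF assms(1)] by (elim conjE)
  then show ?thesis using assms by blast
qed

definition natp where
  "natp x y g U V \<longleftrightarrow> cComp (Psi U) (g U) (snd x U V) = cComp (Psi U) (snd y U V) (farr (P U V) (g V))"

definition famOK where
  "famOK x y g \<longleftrightarrow> (\<forall>U. U \<notin> Bn n \<longrightarrow> g U = undefined) \<and>
     (\<forall>U\<in>Bn n. g U \<in> cArr (Psi U) \<and> cDom (Psi U) (g U) = fst x U \<and> cCod (Psi U) (g U) = fst y U)"

lemma larr_iff: "(x, y, g) \<in> lim_arr n Psi P \<longleftrightarrow> x \<in> lim_obj n Psi P \<and> y \<in> lim_obj n Psi P \<and> famOK x y g \<and>
   (\<forall>U\<in>Bn n. \<forall>V\<in>Bn n. U \<subseteq> V \<longrightarrow> natp x y g U V)"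
  unfolding lim_arr_def famOK_def natp_def hom_def by auto

lemma famOKD: assumes "famOK x y g"
  shows "U \<in> Bn n \<Longrightarrow> g U \<in> cArr (Psi U)" "U \<in> Bn n \<Longrightarrow> cDom (Psi U) (g U) = fst x U"
    "U \<in> Bn n \<Longrightarrow> cCod (Psi U) (g U) = fst y U" "U \<notin> Bn n \<Longrightarrow> g U = undefined"
  using assms unfolding famOK_def by auto

lemma twolim_simps[simp]:
  "cObj (twolim n Psi P) = lim_obj n Psi P" "cArr (twolim n Psi P) = lim_arr n Psi P"
  "cDom (twolim n Psi P) (x, y, g) = x" "cCod (twolim n Psi P) (x, y, g) = y"
  "cId (twolim n Psi P) x = (x, x, \<lambda>U. if U \<in> Bn n then cId (Psi U) (fst x U) else undefined)"
  "cComp (twolim n Psi P) (y, z, h) (x, y', g) = (x, z, \<lambda>U. if U \<in> Bn n then cComp (Psi U) (h U) (g U) else undefined)"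
  by (simp_all add: twolim_def)

lemma lim_id_arr: assumes x: "x \<in> lim_obj n Psi P"
  shows "(x, x, \<lambda>U. if U \<in> Bn n then cId (Psi U) (fst x U) else undefined) \<in> lim_arr n Psi P"
  unfolding larr_iff famOK_def natp_def using lobj[OF x] by (auto simp: x)

lemma lim_comp_arr: assumes f: "(x, y, g) \<in> lim_arr n Psi P" and h: "(y, z, h) \<in> lim_arr n Psi P"
  shows "(x, z, \<lambda>U. if U \<in> Bn n then cComp (Psi U) (h U) (g U) else undefined) \<in> lim_arr n Psi P"
proof -
  have x: "x \<in> lim_obj n Psi P" and y: "y \<in> lim_obj n Psi P" and z: "z \<in> lim_obj n Psi P"
    and fg: "famOK x y g" and fh: "famOK y z h"
    and ng: "\<And>U V. U \<in> Bn n \<Longrightarrow> V \<in> Bn n \<Longrightarrow> U \<subseteq> V \<Longrightarrow> natp x y g U V"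
    and nh: "\<And>U V. U \<in> Bn n \<Longrightarrow> V \<in> Bn n \<Longrightarrow> U \<subseteq> V \<Longrightarrow> natp y z h U V"
    using f h unfolding larr_iff by auto
  note g = famOKD[OF fg] and hh = famOKD[OF fh]
  show ?thesis unfolding larr_iff
  proof (intro conjI x z ballI impI)
    show "famOK x z (\<lambda>U. if U \<in> Bn n then cComp (Psi U) (h U) (g U) else undefined)"
      unfolding famOK_def using g hh by auto
  next
    fix U V assume U: "U \<in> Bn n" and V: "V \<in> Bn n" and UV: "U \<subseteq> V"
    have "cComp (Psi U) (cComp (Psi U) (h U) (g U)) (snd x U V) =
          cComp (Psi U) (snd z U V) (cComp (Psi U) (farr (P U V) (h V)) (farr (P U V) (g V)))"
      apply (rule sq_comp[where b="snd y U V"])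
      using U V UV g hh lobj[OF x] lobj[OF y] lobj[OF z] ng[OF U V UV] nh[OF U V UV]
      by (auto simp: natp_def)
    then show "natp x z (\<lambda>U. if U \<in> Bn n then cComp (Psi U) (h U) (g U) else undefined) U V"
      unfolding natp_def using U V UV g hh by simp
  qed
qed

lemma lim_inv_arr: assumes f: "(x, y, g) \<in> lim_arr n Psi P"
  shows "(y, x, \<lambda>U. if U \<in> Bn n then ginv (Psi U) (g U) else undefined) \<in> lim_arr n Psi P"
proof -
  have x: "x \<in> lim_obj n Psi P" and y: "y \<in> lim_obj n Psi P"
    and fg: "famOK x y g"
    and ng: "\<And>U V. U \<in> Bn n \<Longrightarrow> V \<in> Bn n \<Longrightarrow> U \<subseteq> V \<Longrightarrow> natp x y g U V"
    using f unfolding larr_iff by auto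
  note g = famOKD[OF fg]
  show ?thesis unfolding larr_iff
  proof (intro conjI x y ballI impI)
    show "famOK y x (\<lambda>U. if U \<in> Bn n then ginv (Psi U) (g U) else undefined)"
      unfolding famOK_def using g by auto
  next
    fix U V assume U: "U \<in> Bn n" and V: "V \<in> Bn n" and UV: "U \<subseteq> V"
    have "cComp (Psi U) (ginv (Psi U) (g U)) (snd y U V) = cComp (Psi U) (snd x U V) (ginv (Psi U) (farr (P U V) (g V)))"
      apply (rule sq_inv)
      using U V UV g lobj[OF x] lobj[OF y] ng[OF U V UV]
      by (auto simp: natp_def)
    then show "natp y x (\<lambda>U. if U \<in> Bn n then ginv (Psi U) (g U) else undefined) U V"
      unfolding natp_def using U V UV g by simp
  qed
qed

lemma twolim_groupoid: "groupoid (twolim n Psi P)"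
proof -
  let ?C = "twolim n Psi P"
  have c1: "\<forall>f\<in>cArr ?C. cDom ?C f \<in> cObj ?C \<and> cCod ?C f \<in> cObj ?C"
  proof
    fix f assume "f \<in> cArr ?C"
    then obtain x y g where f: "f = (x, y, g)" "(x, y, g) \<in> lim_arr n Psi P" by (cases f) auto
    then show "cDom ?C f \<in> cObj ?C \<and> cCod ?C f \<in> cObj ?C"
      unfolding larr_iff by simp
  qed
  have c2: "\<forall>x\<in>cObj ?C. cId ?C x \<in> hom ?C x x"
  proof
    fix x assume "x \<in> cObj ?C"
    then show "cId ?C x \<in> hom ?C x x"
      using lim_id_arr[of x] by (auto simp: hom_def)
  qed
  have c3: "\<forall>f\<in>cArr ?C. \<forall>g\<in>cArr ?C. cCod ?C f = cDom ?C g \<longrightarrow>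
         cComp ?C g f \<in> hom ?C (cDom ?C f) (cCod ?C g)"
  proof (intro ballI impI)
    fix f g assume "f \<in> cArr ?C" "g \<in> cArr ?C" "cCod ?C f = cDom ?C g"
    then obtain x y g1 z h where f: "f = (x, y, g1)" "g = (y, z, h)" "(x, y, g1) \<in> lim_arr n Psi P"
      "(y, z, h) \<in> lim_arr n Psi P"
      by (cases f, cases g) auto
    then show "cComp ?C g f \<in> hom ?C (cDom ?C f) (cCod ?C g)"
      using lim_comp_arr[OF f(3,4)] by (auto simp: hom_def)
  qed
  have c4: "\<forall>f\<in>cArr ?C. cComp ?C (cId ?C (cCod ?C f)) f = f \<and> cComp ?C f (cId ?C (cDom ?C f)) = f"
  proof
    fix f assume "f \<in> cArr ?C"
    then obtain x y g where f: "f = (x, y, g)" "(x, y, g) \<in> lim_arr n Psi P" by (cases f) auto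
    then have fg: "famOK x y g" unfolding larr_iff by simp
    note gg = famOKD[OF fg]
    show "cComp ?C (cId ?C (cCod ?C f)) f = f \<and> cComp ?C f (cId ?C (cDom ?C f)) = f"
      using gg f by (auto intro!: ext)
  qed
  have c5: "\<forall>f\<in>cArr ?C. \<forall>g\<in>cArr ?C. \<forall>h\<in>cArr ?C. cCod ?C f = cDom ?C g \<longrightarrow> cCod ?C g = cDom ?C h \<longrightarrow>
         cComp ?C h (cComp ?C g f) = cComp ?C (cComp ?C h g) f"
  proof (intro ballI impI)
    fix f g h assume "f \<in> cArr ?C" "g \<in> cArr ?C" "h \<in> cArr ?C"
      "cCod ?C f = cDom ?C g" "cCod ?C g = cDom ?C h"
    then obtain x y g1 z h1 w k where f: "f = (x, y, g1)" "g = (y, z, h1)" "h = (z, w, k)"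
      "famOK x y g1" "famOK y z h1" "famOK z w k"
      by (cases f, cases g, cases h) (auto simp: larr_iff)
    note a = famOKD[OF f(4)] and b = famOKD[OF f(5)] and c = famOKD[OF f(6)]
    show "cComp ?C h (cComp ?C g f) = cComp ?C (cComp ?C h g) f"
      using a b c f by (auto intro!: ext simp: cat_assoc)
  qed
  have cat: "category ?C" unfolding category_def using c1 c2 c3 c4 c5 by blast
  show ?thesis unfolding groupoid_def
  proof (intro conjI cat ballI)
    fix f assume "f \<in> cArr ?C"
    then obtain x y g where f: "f = (x, y, g)" "(x, y, g) \<in> lim_arr n Psi P" by (cases f) auto
    then have fg: "famOK x y g" unfolding larr_iff by simp
    note gg = famOKD[OF fg]
    define gi where "gi = (\<lambda>U. if U \<in> Bn n then ginv (Psi U) (g U) else undefined)"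
    have m: "(y, x, gi) \<in> hom ?C (cCod ?C f) (cDom ?C f)"
      using lim_inv_arr[OF f(2)] unfolding gi_def f(1) by (simp add: hom_def)
    have e1: "cComp ?C (y, x, gi) f = cId ?C (cDom ?C f)"
      unfolding f(1) gi_def using gg by (auto intro!: ext)
    have e2: "cComp ?C f (y, x, gi) = cId ?C (cCod ?C f)"
      unfolding f(1) gi_def using gg by (auto intro!: ext)
    show "c_iso ?C f"
      unfolding c_iso_def using m e1 e2 \<open>f \<in> cArr ?C\<close> by blast
  qed
qed

end




context gps begin

lemma nat3:
  assumes x: "x \<in> lim_obj n Psi P" and y: "y \<in> lim_obj n Psi P"
    and U: "U \<in> Bn n" and V: "V \<in> Bn n" and W: "W \<in> Bn n" and UV: "U \<subseteq> V" and VW: "V \<subseteq> W"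
    and gU: "g U \<in> cArr (Psi U)" "cDom (Psi U) (g U) = fst x U" "cCod (Psi U) (g U) = fst y U"
    and gV: "g V \<in> cArr (Psi V)" "cDom (Psi V) (g V) = fst x V" "cCod (Psi V) (g V) = fst y V"
    and gW: "g W \<in> cArr (Psi W)" "cDom (Psi W) (g W) = fst x W" "cCod (Psi W) (g W) = fst y W"
    and nVW: "natp x y g V W"
  shows "natp x y g U W \<longleftrightarrow> natp x y g U V"
proof -
  have UW: "U \<subseteq> W" using UV VW by blast
  note lx = lobj(2-4)[OF x] and ly = lobj(2-4)[OF y] and lx1 = lobj(1)[OF x] and ly1 = lobj(1)[OF y]
  have CU: "groupoid (Psi U)" "category (Psi U)" using U by auto
  note cx = lobj_coc[OF x U V W UV VW] and cy = lobj_coc[OF y U V W UV VW]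
  note facts = U V W UV VW UW gU gV gW lx[of U V] lx[of V W] lx[of U W] ly[of U V] ly[of V W] ly[of U W]
     lx1[of U] lx1[of V] lx1[of W] ly1[of U] ly1[of V] ly1[of W]
  let ?pxi = "farr (P U V) (snd x V W)"
  have L: "cComp (Psi U) (g U) (snd x U W) = cComp (Psi U) (cComp (Psi U) (g U) (snd x U V)) ?pxi"
    unfolding cx using facts by (simp add: cat_assoc)
  have nat: "cComp (Psi V) (g V) (snd x V W) = cComp (Psi V) (snd y V W) (farr (P V W) (g W))"
    using nVW unfolding natp_def .
  have Pn: "cComp (Psi U) (farr (P U V) (g V)) ?pxi = cComp (Psi U) (farr (P U V) (snd y V W)) (farr (P U W) (g W))"
  proof -
    have "farr (P U V) (cComp (Psi V) (g V) (snd x V W)) = farr (P U V) (cComp (Psi V) (snd y V W) (farr (P V W) (g W)))"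
      using nat by simp
    then show ?thesis using facts by simp
  qed
  have R: "cComp (Psi U) (snd y U W) (farr (P U W) (g W)) =
     cComp (Psi U) (cComp (Psi U) (snd y U V) (farr (P U V) (g V))) ?pxi"
  proof -
    have "cComp (Psi U) (cComp (Psi U) (snd y U V) (farr (P U V) (g V))) ?pxi =
          cComp (Psi U) (snd y U V) (cComp (Psi U) (farr (P U V) (g V)) ?pxi)"
      using facts by (simp add: cat_assoc)
    also have "\<dots> = cComp (Psi U) (snd y U V) (cComp (Psi U) (farr (P U V) (snd y V W)) (farr (P U W) (g W)))"
      using Pn by simp
    also have "\<dots> = cComp (Psi U) (snd y U W) (farr (P U W) (g W))"
      unfolding cy using facts by (simp add: cat_assoc)
    finally show ?thesis by simp
  qed
  show ?thesis
  proof
    assume "natp x y g U W"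
    then have eq: "cComp (Psi U) (cComp (Psi U) (g U) (snd x U V)) ?pxi =
       cComp (Psi U) (cComp (Psi U) (snd y U V) (farr (P U V) (g V))) ?pxi"
      unfolding natp_def L R .
    have i: "c_iso (Psi U) ?pxi" using facts by (simp add: gpd_iso)
    show "natp x y g U V" unfolding natp_def
      by (rule iso_cancel_right[OF CU(2) i _ _ _ _ eq]) (use facts in simp_all)
  next
    assume "natp x y g U V"
    then show "natp x y g U W" unfolding natp_def L R by simp
  qed
qed

definition extf where
  "extf x y g = (\<lambda>U. if U \<in> Bn n then (if topS n U then g U else
       cComp (Psi U) (cComp (Psi U) (snd y U (mx n U)) (farr (P U (mx n U)) (g (mx n U))))
          (ginv (Psi U) (snd x U (mx n U)))) else undefined)"

lemma ext_lemma:
  assumes x: "x \<in> lim_obj n Psi P" and y: "y \<in> lim_obj n Psi P"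
    and gT: "\<And>S. topS n S \<Longrightarrow> g S \<in> cArr (Psi S) \<and> cDom (Psi S) (g S) = fst x S \<and> cCod (Psi S) (g S) = fst y S"
    and nT: "\<And>S T. topS n S \<Longrightarrow> topS n T \<Longrightarrow> S \<subseteq> T \<Longrightarrow> natp x y g S T"
  shows "(x, y, extf x y g) \<in> lim_arr n Psi P" "\<And>S. topS n S \<Longrightarrow> extf x y g S = g S"
proof -
  let ?h = "extf x y g"
  note lx = lobj(2-4)[OF x] and ly = lobj(2-4)[OF y] and lx1 = lobj(1)[OF x] and ly1 = lobj(1)[OF y]
  show agree: "\<And>S. topS n S \<Longrightarrow> ?h S = g S" unfolding extf_def using topS_Bn by auto
  have hlow: "?h U = cComp (Psi U) (cComp (Psi U) (snd y U (mx n U)) (farr (P U (mx n U)) (g (mx n U))))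
          (ginv (Psi U) (snd x U (mx n U)))" if "U \<in> Bn n" "\<not> topS n U" for U
    unfolding extf_def using that by simp
  have hA: "?h U \<in> cArr (Psi U) \<and> cDom (Psi U) (?h U) = fst x U \<and> cCod (Psi U) (?h U) = fst y U"
    if U: "U \<in> Bn n" for U
  proof (cases "topS n U")
    case True then show ?thesis using agree gT by simp
  next
    case False
    let ?M = "mx n U"
    have M: "maxl n ?M" "U \<subseteq> ?M" using mx[OF U] by auto
    have Mb: "?M \<in> Bn n" "topS n ?M" using M maxl_Bn maxl_top by auto
    show ?thesis unfolding hlow[OF U False]
      using U M Mb gT[OF Mb(2)] lx[of U ?M] ly[of U ?M] lx1[of ?M] lx1[of U] ly1[of U] by simp
  qed
  have famok: "famOK x y ?h" unfolding famOK_def using hA by (auto simp: extf_def)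
  have nat3h: "natp x y ?h U W \<longleftrightarrow> natp x y ?h U V"
    if "U \<in> Bn n" "V \<in> Bn n" "W \<in> Bn n" "U \<subseteq> V" "V \<subseteq> W" "natp x y ?h V W" for U V W
    using nat3[OF x y that(1-5) _ _ _ _ _ _ _ _ _ that(6)] hA[OF that(1)] hA[OF that(2)] hA[OF that(3)] by blast
  have nTh: "natp x y ?h S T" if "topS n S" "topS n T" "S \<subseteq> T" for S T
    using nT[OF that] agree[OF that(1)] agree[OF that(2)] unfolding natp_def by simp
  have A: "natp x y ?h U (mx n U)" if U: "U \<in> Bn n" "\<not> topS n U" for U
  proof -
    let ?M = "mx n U"
    have M: "maxl n ?M" "U \<subseteq> ?M" using mx[OF U(1)] by auto
    have Mb: "?M \<in> Bn n" "topS n ?M" using M maxl_Bn maxl_top by auto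
    show ?thesis unfolding natp_def hlow[OF U] agree[OF Mb(2)]
      using U M Mb gT[OF Mb(2)] lx[of U ?M] ly[of U ?M] lx1[of ?M] lx1[of U] ly1[of U] by simp
  qed
  have B: "natp x y ?h U M" if U: "U \<in> Bn n" "\<not> topS n U" and M: "maxl n M" "U \<subseteq> M" for U M
  proof -
    let ?M0 = "mx n U"
    have M0: "maxl n ?M0" "U \<subseteq> ?M0" using mx[OF U(1)] by auto
    let ?K = "?M0 \<inter> M"
    have K: "topS n ?K" "U \<subseteq> ?K" using maxl_int2[OF M0(1) M(1)] M0 M by auto
    have Kb: "?K \<in> Bn n" using K topS_Bn by auto
    have b: "?M0 \<in> Bn n" "M \<in> Bn n" "topS n ?M0" "topS n M" using M0 M maxl_Bn maxl_top by auto
    have "natp x y ?h U ?K"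
      using nat3h[OF U(1) Kb b(1) K(2) _ nTh[OF K(1) b(3)]] A[OF U] by blast
    then show ?thesis
      using nat3h[OF U(1) Kb b(2) K(2) _ nTh[OF K(1) b(4)]] by blast
  qed
  have C: "natp x y ?h U V" if U: "U \<in> Bn n" and V: "V \<in> Bn n" and UV: "U \<subseteq> V" for U V
  proof (cases "topS n U")
    case True
    then have "topS n V" using topS_up UV V by blast
    then show ?thesis using nTh True UV by blast
  next
    case False
    show ?thesis
    proof (cases "topS n V")
      case True
      let ?M = "mx n V"
      have M: "maxl n ?M" "V \<subseteq> ?M" using mx[OF V] by auto
      have Mb: "?M \<in> Bn n" "topS n ?M" using M maxl_Bn maxl_top by auto
      have "natp x y ?h U ?M" using B[OF U False M(1)] M UV by blast
      then show ?thesis using nat3h[OF U V Mb(1) UV M(2) nTh[OF True Mb(2) M(2)]] by blast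
    next
      case Vl: False
      let ?M = "mx n V"
      have M: "maxl n ?M" "V \<subseteq> ?M" using mx[OF V] by auto
      have Mb: "?M \<in> Bn n" using M maxl_Bn by auto
      have "natp x y ?h U ?M" using B[OF U False M(1)] M UV by blast
      then show ?thesis using nat3h[OF U V Mb(1) UV M(2) A[OF V Vl]] by blast
    qed
  qed
  show "(x, y, ?h) \<in> lim_arr n Psi P" unfolding larr_iff using x y famok C by blast
qed

end




lemma cone_unique:
  assumes gC: "groupoid C" and M0: "M0 \<in> Mx" and MxT: "Mx \<subseteq> T"
   and up: "\<And>V. V \<in> T \<Longrightarrow> \<exists>M\<in>Mx. V \<subseteq> M"
   and i2: "\<And>M M'. M \<in> Mx \<Longrightarrow> M' \<in> Mx \<Longrightarrow> M \<inter> M' \<in> T"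
   and r: "\<And>V W. V \<in> T \<Longrightarrow> W \<in> T \<Longrightarrow> V \<subseteq> W \<Longrightarrow> r V W \<in> cArr C \<and> cDom C (r V W) = c W \<and> cCod C (r V W) = c V"
   and e: "\<And>V. V \<in> T \<Longrightarrow> e V \<in> cArr C \<and> cDom C (e V) = c V \<and> cCod C (e V) = d"
   and ec: "\<And>V W. V \<in> T \<Longrightarrow> W \<in> T \<Longrightarrow> V \<subseteq> W \<Longrightarrow> e W = cComp C (e V) (r V W)"
   and e': "\<And>V. V \<in> T \<Longrightarrow> e' V \<in> cArr C \<and> cDom C (e' V) = c V \<and> cCod C (e' V) = d"
   and ec': "\<And>V W. V \<in> T \<Longrightarrow> W \<in> T \<Longrightarrow> V \<subseteq> W \<Longrightarrow> e' W = cComp C (e' V) (r V W)"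
   and eq0: "e M0 = e' M0"
  shows "\<And>V. V \<in> T \<Longrightarrow> e V = e' V"
proof -
  have solve: "\<And>f V W. (\<And>V. V \<in> T \<Longrightarrow> f V \<in> cArr C \<and> cDom C (f V) = c V \<and> cCod C (f V) = d) \<Longrightarrow>
     (\<And>V W. V \<in> T \<Longrightarrow> W \<in> T \<Longrightarrow> V \<subseteq> W \<Longrightarrow> f W = cComp C (f V) (r V W)) \<Longrightarrow>
      V \<in> T \<Longrightarrow> W \<in> T \<Longrightarrow> V \<subseteq> W \<Longrightarrow> f V = cComp C (f W) (ginv C (r V W))"
  proof -
    fix f V W assume f: "\<And>V. V \<in> T \<Longrightarrow> f V \<in> cArr C \<and> cDom C (f V) = c V \<and> cCod C (f V) = d"
      and fc: "\<And>V W. V \<in> T \<Longrightarrow> W \<in> T \<Longrightarrow> V \<subseteq> W \<Longrightarrow> f W = cComp C (f V) (r V W)"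
      and VW: "V \<in> T" "W \<in> T" "V \<subseteq> W"
    have "cComp C (f W) (ginv C (r V W)) = cComp C (cComp C (f V) (r V W)) (ginv C (r V W))"
      using fc[OF VW] by simp
    also have "\<dots> = f V" using gC f[OF VW(1)] r[OF VW] by simp
    finally show "f V = cComp C (f W) (ginv C (r V W))" by simp
  qed
  have M0T: "M0 \<in> T" using M0 MxT by blast
  have onM: "e M = e' M" if M: "M \<in> Mx" for M
  proof -
    have K: "M \<inter> M0 \<in> T" using i2[OF M M0] .
    have MT: "M \<in> T" using M MxT by blast
    have "e (M \<inter> M0) = e' (M \<inter> M0)"
      using solve[of e "M \<inter> M0" M0, OF e ec K M0T] solve[of e' "M \<inter> M0" M0, OF e' ec' K M0T] eq0 by simp
    then show ?thesis using ec[OF K MT] ec'[OF K MT] by simp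
  qed
  fix V assume V: "V \<in> T"
  from up[OF V] obtain M where M: "M \<in> Mx" "V \<subseteq> M" by blast
  have MT: "M \<in> T" using M MxT by blast
  show "e V = e' V"
    using solve[of e V M, OF e ec V MT M(2)] solve[of e' V M, OF e' ec' V MT M(2)] onM[OF M(1)] by simp
qed

lemma cone_exists:
  assumes gC: "groupoid C" and M0: "M0 \<in> Mx" and MxT: "Mx \<subseteq> T"
   and up: "\<And>V. V \<in> T \<Longrightarrow> \<exists>M\<in>Mx. V \<subseteq> M"
   and i3: "\<And>M M' M''. M \<in> Mx \<Longrightarrow> M' \<in> Mx \<Longrightarrow> M'' \<in> Mx \<Longrightarrow> M \<inter> M' \<inter> M'' \<in> T"
   and c: "\<And>V. V \<in> T \<Longrightarrow> c V \<in> cObj C"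
   and r: "\<And>V W. V \<in> T \<Longrightarrow> W \<in> T \<Longrightarrow> V \<subseteq> W \<Longrightarrow> r V W \<in> cArr C \<and> cDom C (r V W) = c W \<and> cCod C (r V W) = c V"
   and rid: "\<And>V. V \<in> T \<Longrightarrow> r V V = cId C (c V)"
   and rc: "\<And>V W X. V \<in> T \<Longrightarrow> W \<in> T \<Longrightarrow> X \<in> T \<Longrightarrow> V \<subseteq> W \<Longrightarrow> W \<subseteq> X \<Longrightarrow> r V X = cComp C (r V W) (r W X)"
  shows "\<exists>e. (\<forall>V\<in>T. e V \<in> cArr C \<and> cDom C (e V) = c V \<and> cCod C (e V) = c M0) \<and>
      (\<forall>V\<in>T. \<forall>W\<in>T. V \<subseteq> W \<longrightarrow> e W = cComp C (e V) (r V W)) \<and> e M0 = cId C (c M0)"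
proof -
  have cC: "category C" using gC by simp
  have i2: "M \<inter> M' \<in> T" if "M \<in> Mx" "M' \<in> Mx" for M M'
    using i3[OF that that(2)] by (simp add: Int_absorb)
  define sg where "sg M M' = cComp C (ginv C (r (M \<inter> M') M)) (r (M \<inter> M') M')" for M M'
  have form: "sg M M' = cComp C (ginv C (r L M)) (r L M')"
    if M: "M \<in> Mx" "M' \<in> Mx" and L: "L \<in> T" "L \<subseteq> M \<inter> M'" for M M' L
  proof -
    let ?K = "M \<inter> M'"
    have K: "?K \<in> T" using i2[OF M] .
    have MT: "M \<in> T" "M' \<in> T" using M MxT by auto
    have LK: "L \<subseteq> ?K" "?K \<subseteq> M" "?K \<subseteq> M'" using L by auto
    have e1: "r L M = cComp C (r L ?K) (r ?K M)" using rc[OF L(1) K MT(1) LK(1,2)] .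
    have e2: "r L M' = cComp C (r L ?K) (r ?K M')" using rc[OF L(1) K MT(2) LK(1,3)] .
    show ?thesis unfolding sg_def e1 e2
      using gC r[OF L(1) K LK(1)] r[OF K MT(1) LK(2)] r[OF K MT(2) LK(3)] by (simp add: cat_assoc)
  qed
  define mxx where "mxx V = (SOME M. M \<in> Mx \<and> V \<subseteq> M)" for V
  have mxx: "mxx V \<in> Mx \<and> V \<subseteq> mxx V" if "V \<in> T" for V
  proof -
    from up[OF that] obtain M where "M \<in> Mx \<and> V \<subseteq> M" by blast
    then show ?thesis unfolding mxx_def by (rule someI)
  qed
  define e where "e V = cComp C (sg M0 (mxx V)) (ginv C (r V (mxx V)))" for V
  have M0T: "M0 \<in> T" using M0 MxT by auto
  have sgA: "sg M M' \<in> cArr C \<and> cDom C (sg M M') = c M' \<and> cCod C (sg M M') = c M" if "M \<in> Mx" "M' \<in> Mx" for M M'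
  proof -
    have "M \<inter> M' \<in> T" "M \<in> T" "M' \<in> T" using i2[OF that] that MxT by auto
    then show ?thesis unfolding sg_def using gC r[of "M \<inter> M'" M] r[of "M \<inter> M'" M'] by simp
  qed
  have eA: "e V \<in> cArr C \<and> cDom C (e V) = c V \<and> cCod C (e V) = c M0" if V: "V \<in> T" for V
  proof -
    have m: "mxx V \<in> Mx" "V \<subseteq> mxx V" "mxx V \<in> T" using mxx[OF V] MxT by auto
    show ?thesis unfolding e_def using gC sgA[OF M0 m(1)] r[OF V m(3) m(2)] by simp
  qed
  have cone: "e W = cComp C (e V) (r V W)" if VW: "V \<in> T" "W \<in> T" "V \<subseteq> W" for V W
  proof -
    let ?Mv = "mxx V" and ?Mw = "mxx W"
    have mv: "?Mv \<in> Mx" "V \<subseteq> ?Mv" "?Mv \<in> T" using mxx[OF VW(1)] MxT by auto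
    have mw: "?Mw \<in> Mx" "W \<subseteq> ?Mw" "?Mw \<in> T" using mxx[OF VW(2)] MxT by auto
    let ?L = "M0 \<inter> ?Mv \<inter> ?Mw"
    have L: "?L \<in> T" using i3[OF M0 mv(1) mw(1)] .
    have Ls: "?L \<subseteq> M0" "?L \<subseteq> ?Mv" "?L \<subseteq> ?Mw" by auto
    have s1: "sg M0 ?Mw = cComp C (sg M0 ?Mv) (sg ?Mv ?Mw)"
    proof -
      have a: "sg M0 ?Mw = cComp C (ginv C (r ?L M0)) (r ?L ?Mw)" by (rule form[OF M0 mw(1) L]) auto
      have b: "sg M0 ?Mv = cComp C (ginv C (r ?L M0)) (r ?L ?Mv)" by (rule form[OF M0 mv(1) L]) auto
      have c': "sg ?Mv ?Mw = cComp C (ginv C (r ?L ?Mv)) (r ?L ?Mw)" by (rule form[OF mv(1) mw(1) L]) auto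
      show ?thesis unfolding a b c'
        using gC r[OF L M0T Ls(1)] r[OF L mv(3) Ls(2)] r[OF L mw(3) Ls(3)] by (simp add: cat_assoc)
    qed
    have s2: "sg ?Mv ?Mw = cComp C (ginv C (r V ?Mv)) (r V ?Mw)"
      by (rule form[OF mv(1) mw(1) VW(1)]) (use mv mw VW in auto)
    have s3: "r V ?Mw = cComp C (r V W) (r W ?Mw)" using rc[OF VW(1,2) mw(3) VW(3) mw(2)] .
    show ?thesis unfolding e_def s1 s2 s3
      using gC sgA[OF M0 mv(1)] r[OF VW] r[OF VW(1) mv(3) mv(2)] r[OF VW(2) mw(3) mw(2)]
      by (simp add: cat_assoc)
  qed
  have e0: "e M0 = cId C (c M0)"
  proof -
    have m: "mxx M0 \<in> Mx" "M0 \<subseteq> mxx M0" "mxx M0 \<in> T" using mxx[OF M0T] MxT by auto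
    have "sg M0 (mxx M0) = cComp C (ginv C (r M0 M0)) (r M0 (mxx M0))"
      by (rule form[OF M0 m(1) M0T]) (use m in auto)
    then have "sg M0 (mxx M0) = r M0 (mxx M0)" using rid[OF M0T] gC r[OF M0T m(3) m(2)] c[OF M0T] by simp
    then show ?thesis unfolding e_def using gC r[OF M0T m(3) m(2)] by simp
  qed
  show ?thesis using eA cone e0 by blast
qed




context gps begin

lemma lobjI:
  assumes "\<forall>U. U \<notin> Bn n \<longrightarrow> a U = undefined"
    "\<forall>U V. \<not> (U \<in> Bn n \<and> V \<in> Bn n \<and> U \<subseteq> V) \<longrightarrow> al U V = undefined"
    "\<forall>U\<in>Bn n. a U \<in> cObj (Psi U)"
    "\<forall>U\<in>Bn n. \<forall>V\<in>Bn n. U \<subseteq> V \<longrightarrow> al U V \<in> hom (Psi U) (fobj (P U V) (a V)) (a U)"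
    "\<forall>U\<in>Bn n. al U U = cId (Psi U) (a U)"
    "\<forall>U\<in>Bn n. \<forall>V\<in>Bn n. \<forall>W\<in>Bn n. U \<subseteq> V \<longrightarrow> V \<subseteq> W \<longrightarrow>
        al U W = cComp (Psi U) (al U V) (farr (P U V) (al V W))"
  shows "(a, al) \<in> lim_obj n Psi P"
  unfolding lim_obj_def mem_Collect_eq prod.case using assms by (intro conjI)

end

locale two =
  fixes n :: nat
    and Phi :: "nat set \<Rightarrow> ('o, 'm) cat"
    and P :: "nat set \<Rightarrow> nat set \<Rightarrow> ('o, 'm, 'o, 'm) func"
    and Phi' :: "nat set \<Rightarrow> ('o2, 'm2) cat"
    and P' :: "nat set \<Rightarrow> nat set \<Rightarrow> ('o2, 'm2, 'o2, 'm2) func"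
    and theta :: "nat set \<Rightarrow> ('o, 'm, 'o2, 'm2) func"
  assumes pA: "gpd_presheaf n Phi P" and pB: "gpd_presheaf n Phi' P'"
    and nt: "gpd_nat_trans n Phi P Phi' P' theta"
    and eqv: "\<And>S. topS n S \<Longrightarrow> equivalence (Phi S) (Phi' S) (theta S)"
begin

sublocale A: gps n Phi P using pA by unfold_locales
sublocale B: gps n Phi' P' using pB by unfold_locales

lemma th_fun: "U \<in> Bn n \<Longrightarrow> is_functor (Phi U) (Phi' U) (theta U)"
  using nt unfolding gpd_nat_trans_def by blast

lemma th_P[simp]:
  "U \<in> Bn n \<Longrightarrow> V \<in> Bn n \<Longrightarrow> U \<subseteq> V \<Longrightarrow> x \<in> cObj (Phi V) \<Longrightarrow>
     fobj (theta U) (fobj (P U V) x) = fobj (P' U V) (fobj (theta V) x)"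
  "U \<in> Bn n \<Longrightarrow> V \<in> Bn n \<Longrightarrow> U \<subseteq> V \<Longrightarrow> f \<in> cArr (Phi V) \<Longrightarrow>
     farr (theta U) (farr (P U V) f) = farr (P' U V) (farr (theta V) f)"
  using nt unfolding gpd_nat_trans_def by blast+

lemma th_arr[simp]:
  assumes "U \<in> Bn n" "f \<in> cArr (Phi U)"
  shows "farr (theta U) f \<in> cArr (Phi' U)" "cDom (Phi' U) (farr (theta U) f) = fobj (theta U) (cDom (Phi U) f)"
    "cCod (Phi' U) (farr (theta U) f) = fobj (theta U) (cCod (Phi U) f)"
  using fun_arr[OF th_fun[OF assms(1)] assms(2)] by blast+

lemma th_obj[simp]: "U \<in> Bn n \<Longrightarrow> x \<in> cObj (Phi U) \<Longrightarrow> fobj (theta U) x \<in> cObj (Phi' U)"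
  using fun_obj[OF th_fun] by blast

lemma th_id[simp]: "U \<in> Bn n \<Longrightarrow> x \<in> cObj (Phi U) \<Longrightarrow> farr (theta U) (cId (Phi U) x) = cId (Phi' U) (fobj (theta U) x)"
  using fun_id[OF th_fun] by blast

lemma th_comp[simp]: "U \<in> Bn n \<Longrightarrow> f \<in> cArr (Phi U) \<Longrightarrow> g \<in> cArr (Phi U) \<Longrightarrow> cCod (Phi U) f = cDom (Phi U) g \<Longrightarrow>
   farr (theta U) (cComp (Phi U) g f) = cComp (Phi' U) (farr (theta U) g) (farr (theta U) f)"
  using fun_comp[OF th_fun] by blast

lemma th_ginv[simp]: "U \<in> Bn n \<Longrightarrow> f \<in> cArr (Phi U) \<Longrightarrow> farr (theta U) (ginv (Phi U) f) = ginv (Phi' U) (farr (theta U) f)"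
  using fun_ginv[OF th_fun] by simp

lemma top_ff: assumes "topS n S"
  shows "faithfulF (Phi S) (theta S)" "fullF (Phi S) (Phi' S) (theta S)" "esF (Phi S) (Phi' S) (theta S)"
  using equivalence_ff[OF A.gpd B.gpd eqv[OF assms]] topS_Bn[OF assms] by auto

abbreviation "F \<equiv> lim_func n theta"

lemma Fobj: "fobj F (a, al) = (\<lambda>U. if U \<in> Bn n then fobj (theta U) (a U) else undefined,
      \<lambda>U V. if U \<in> Bn n \<and> V \<in> Bn n \<and> U \<subseteq> V then farr (theta U) (al U V) else undefined)"
  by (simp add: lim_func_def lim_fobj_def)

lemma Fobj_fst: "U \<in> Bn n \<Longrightarrow> fst (fobj F x) U = fobj (theta U) (fst x U)"
  by (cases x) (simp add: Fobj)
lemma Fobj_snd: "U \<in> Bn n \<Longrightarrow> V \<in> Bn n \<Longrightarrow> U \<subseteq> V \<Longrightarrow> snd (fobj F x) U V = farr (theta U) (snd x U V)"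
  by (cases x) (simp add: Fobj)

lemma Farr: "farr F (x, y, g) = (fobj F x, fobj F y, \<lambda>U. if U \<in> Bn n then farr (theta U) (g U) else undefined)"
  by (simp add: lim_func_def)

lemma F_obj: assumes x: "x \<in> lim_obj n Phi P" shows "fobj F x \<in> lim_obj n Phi' P'"
proof -
  obtain a al where xe: "x = (a, al)" by (cases x)
  note lx = A.lobj(2-4)[OF x] and lx1 = A.lobj(1)[OF x] and lx5 = A.lobj(5)[OF x]
  show ?thesis unfolding xe Fobj
  proof (rule B.lobjI, goal_cases)
    case 1 then show ?case by simp
  next
    case 2 then show ?case by simp
  next
    case 3 then show ?case using lx1 xe by simp
  next
    case 4 then show ?case using lx lx1 xe by (auto simp: hom_def)
  next
    case 5 then show ?case using lx5 lx1 xe by simp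
  next
    case 6
    show ?case
    proof (intro ballI impI)
      fix U V W assume UVW: "U \<in> Bn n" "V \<in> Bn n" "W \<in> Bn n" "U \<subseteq> V" "V \<subseteq> W"
      have "U \<subseteq> W" using UVW by blast
      then show "(if U \<in> Bn n \<and> W \<in> Bn n \<and> U \<subseteq> W then farr (theta U) (al U W) else undefined) =
         cComp (Phi' U) (if U \<in> Bn n \<and> V \<in> Bn n \<and> U \<subseteq> V then farr (theta U) (al U V) else undefined)
          (farr (P' U V) (if V \<in> Bn n \<and> W \<in> Bn n \<and> V \<subseteq> W then farr (theta V) (al V W) else undefined))"
        using UVW A.lobj_coc[OF x UVW] lx[of U V] lx[of V W] lx1[of U] lx1[of V] lx1[of W] xe
        by simp
    qed
  qed
qed

lemma F_arr: assumes f: "(x, y, g) \<in> lim_arr n Phi P"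
  shows "farr F (x, y, g) \<in> lim_arr n Phi' P'"
proof -
  have x: "x \<in> lim_obj n Phi P" and y: "y \<in> lim_obj n Phi P" and fg: "A.famOK x y g"
    and ng: "\<And>U V. U \<in> Bn n \<Longrightarrow> V \<in> Bn n \<Longrightarrow> U \<subseteq> V \<Longrightarrow> A.natp x y g U V"
    using f unfolding A.larr_iff by auto
  note gg = A.famOKD[OF fg]
  note lx = A.lobj(2-4)[OF x] and ly = A.lobj(2-4)[OF y]
  show ?thesis unfolding Farr B.larr_iff
  proof (intro conjI F_obj x y ballI impI)
    show "B.famOK (fobj F x) (fobj F y) (\<lambda>U. if U \<in> Bn n then farr (theta U) (g U) else undefined)"
      unfolding B.famOK_def using gg by (auto simp: Fobj_fst)
  next
    fix U V assume U: "U \<in> Bn n" and V: "V \<in> Bn n" and UV: "U \<subseteq> V"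
    have "farr (theta U) (cComp (Phi U) (g U) (snd x U V)) = farr (theta U) (cComp (Phi U) (snd y U V) (farr (P U V) (g V)))"
      using ng[OF U V UV] unfolding A.natp_def by simp
    then show "B.natp (fobj F x) (fobj F y) (\<lambda>U. if U \<in> Bn n then farr (theta U) (g U) else undefined) U V"
      unfolding B.natp_def using U V UV gg lx[of U V] ly[of U V] by (simp add: Fobj_snd)
  qed
qed

lemma F_functor: "is_functor (twolim n Phi P) (twolim n Phi' P') F"
  unfolding is_functor_def
proof (intro conjI ballI impI)
  fix x assume "x \<in> cObj (twolim n Phi P)"
  then show "fobj F x \<in> cObj (twolim n Phi' P')" using F_obj by simp
next
  fix f assume "f \<in> cArr (twolim n Phi P)"
  then obtain x y g where f: "f = (x, y, g)" "(x, y, g) \<in> lim_arr n Phi P" by (cases f) auto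
  show "farr F f \<in> hom (twolim n Phi' P') (fobj F (cDom (twolim n Phi P) f)) (fobj F (cCod (twolim n Phi P) f))"
    using F_arr[OF f(2)] f(1) by (simp add: hom_def Farr)
next
  fix x assume x: "x \<in> cObj (twolim n Phi P)"
  then have x': "x \<in> lim_obj n Phi P" by simp
  note lx1 = A.lobj(1)[OF x']
  show "farr F (cId (twolim n Phi P) x) = cId (twolim n Phi' P') (fobj F x)"
    using lx1 by (auto simp: Farr Fobj_fst intro!: ext)
next
  fix f g assume "f \<in> cArr (twolim n Phi P)" "g \<in> cArr (twolim n Phi P)" "cCod (twolim n Phi P) f = cDom (twolim n Phi P) g"
  then obtain x y g1 z h where f: "f = (x, y, g1)" "g = (y, z, h)" "A.famOK x y g1" "A.famOK y z h"
    by (cases f, cases g) (auto simp: A.larr_iff)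
  note a = A.famOKD[OF f(3)] and b = A.famOKD[OF f(4)]
  show "farr F (cComp (twolim n Phi P) g f) = cComp (twolim n Phi' P') (farr F g) (farr F f)"
    using a b f by (auto simp: Farr intro!: ext)
qed

end




context two begin

lemma lower_nat_eq:
  assumes x: "x \<in> lim_obj n Phi P" and y: "y \<in> lim_obj n Phi P"
    and U: "U \<in> Bn n" and g: "(x, y, g) \<in> lim_arr n Phi P" and g': "(x, y, g') \<in> lim_arr n Phi P"
    and eqM: "g (mx n U) = g' (mx n U)"
  shows "g U = g' U"
proof -
  let ?M = "mx n U"
  have M: "maxl n ?M" "U \<subseteq> ?M" using mx[OF U] by auto
  have Mb: "?M \<in> Bn n" using M maxl_Bn by auto
  have fg: "A.famOK x y g" "A.famOK x y g'" using g g' unfolding A.larr_iff by auto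
  note a = A.famOKD[OF fg(1)] and b = A.famOKD[OF fg(2)]
  have n1: "A.natp x y g U ?M" "A.natp x y g' U ?M" using g g' U Mb M unfolding A.larr_iff by auto
  have eq: "cComp (Phi U) (g U) (snd x U ?M) = cComp (Phi U) (g' U) (snd x U ?M)"
    using n1 eqM unfolding A.natp_def by simp
  note lx = A.lobj(2-4)[OF x]
  have i: "c_iso (Phi U) (snd x U ?M)" using U Mb M lx by (simp add: gpd_iso)
  show ?thesis
    by (rule iso_cancel_right[OF _ i _ _ _ _ eq]) (use U Mb M lx a b in simp_all)
qed

lemma F_faithful: "faithfulF (twolim n Phi P) F"
  unfolding faithfulF_def
proof (intro ballI impI)
  fix f f' assume f: "f \<in> cArr (twolim n Phi P)" "f' \<in> cArr (twolim n Phi P)"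
    and h: "cDom (twolim n Phi P) f = cDom (twolim n Phi P) f' \<and> cCod (twolim n Phi P) f = cCod (twolim n Phi P) f' \<and>
      farr F f = farr F f'"
  obtain x y g where fe: "f = (x, y, g)" by (cases f)
  obtain x' y' g' where fe': "f' = (x', y', g')" by (cases f')
  have xx: "x' = x" "y' = y" using h fe fe' by auto
  have ga: "(x, y, g) \<in> lim_arr n Phi P" "(x, y, g') \<in> lim_arr n Phi P" using f fe fe' xx by auto
  have x: "x \<in> lim_obj n Phi P" and y: "y \<in> lim_obj n Phi P" using ga unfolding A.larr_iff by auto
  have fg: "A.famOK x y g" "A.famOK x y g'" using ga unfolding A.larr_iff by auto
  note a = A.famOKD[OF fg(1)] and b = A.famOKD[OF fg(2)]
  have th: "farr (theta U) (g U) = farr (theta U) (g' U)" if "U \<in> Bn n" for U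
  proof -
    have "(\<lambda>U. if U \<in> Bn n then farr (theta U) (g U) else undefined) = (\<lambda>U. if U \<in> Bn n then farr (theta U) (g' U) else undefined)"
      using h fe fe' xx by (simp add: Farr)
    then show ?thesis using that by (metis (full_types))
  qed
  have top: "g S = g' S" if S: "topS n S" for S
  proof -
    have Sb: "S \<in> Bn n" using S topS_Bn by auto
    show ?thesis using ffD[OF top_ff(1)[OF S], of "g S" "fst x S" "fst y S" "g' S"] a b Sb th[OF Sb]
      by (simp add: hom_def)
  qed
  have "g = g'"
  proof
    fix U show "g U = g' U"
    proof (cases "U \<in> Bn n")
      case False then show ?thesis using a b by simp
    next
      case True
      have "topS n (mx n U)" using mx[OF True] maxl_top by auto
      then show ?thesis using lower_nat_eq[OF x y True ga] top by blast
    qed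
  qed
  then show "f = f'" using fe fe' xx by simp
qed

lemma F_full: "fullF (twolim n Phi P) (twolim n Phi' P') F"
  unfolding fullF_def
proof (intro ballI)
  fix x y h assume x': "x \<in> cObj (twolim n Phi P)" and y': "y \<in> cObj (twolim n Phi P)"
    and h: "h \<in> hom (twolim n Phi' P') (fobj F x) (fobj F y)"
  have x: "x \<in> lim_obj n Phi P" and y: "y \<in> lim_obj n Phi P" using x' y' by auto
  obtain k where he: "h = (fobj F x, fobj F y, k)" and hk: "(fobj F x, fobj F y, k) \<in> lim_arr n Phi' P'"
    using h by (cases h) (auto simp: hom_def)
  have fk: "B.famOK (fobj F x) (fobj F y) k" and nk: "\<And>U V. U \<in> Bn n \<Longrightarrow> V \<in> Bn n \<Longrightarrow> U \<subseteq> V \<Longrightarrow> B.natp (fobj F x) (fobj F y) k U V"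
    using hk unfolding B.larr_iff by auto
  note kk = B.famOKD[OF fk]
  note lx = A.lobj(2-4)[OF x] and ly = A.lobj(2-4)[OF y] and lx1 = A.lobj(1)[OF x] and ly1 = A.lobj(1)[OF y]
  define g0 where "g0 S = (SOME f. f \<in> hom (Phi S) (fst x S) (fst y S) \<and> farr (theta S) f = k S)" for S
  have g0: "g0 S \<in> cArr (Phi S) \<and> cDom (Phi S) (g0 S) = fst x S \<and> cCod (Phi S) (g0 S) = fst y S \<and> farr (theta S) (g0 S) = k S"
    if S: "topS n S" for S
  proof -
    have Sb: "S \<in> Bn n" using S topS_Bn by auto
    have "k S \<in> hom (Phi' S) (fobj (theta S) (fst x S)) (fobj (theta S) (fst y S))"
      using kk Sb by (simp add: hom_def Fobj_fst)
    then obtain f where "f \<in> hom (Phi S) (fst x S) (fst y S) \<and> farr (theta S) f = k S"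
      using top_ff(2)[OF S] lx1[OF Sb] ly1[OF Sb] unfolding fullF_def by blast
    then have "g0 S \<in> hom (Phi S) (fst x S) (fst y S) \<and> farr (theta S) (g0 S) = k S"
      unfolding g0_def by (rule someI)
    then show ?thesis by (simp add: hom_def)
  qed
  have n0: "A.natp x y g0 S T" if S: "topS n S" and T: "topS n T" and ST: "S \<subseteq> T" for S T
  proof -
    have Sb: "S \<in> Bn n" and Tb: "T \<in> Bn n" using S T topS_Bn by auto
    have e: "farr (theta S) (cComp (Phi S) (g0 S) (snd x S T)) = farr (theta S) (cComp (Phi S) (snd y S T) (farr (P S T) (g0 T)))"
      using nk[OF Sb Tb ST] g0[OF S] g0[OF T] Sb Tb ST lx[of S T] ly[of S T] lx1 ly1
      unfolding B.natp_def by (simp add: Fobj_snd)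
    show ?thesis unfolding A.natp_def
      using ffD[OF top_ff(1)[OF S] _ _ e] g0[OF S] g0[OF T] Sb Tb ST lx[of S T] ly[of S T] lx1 ly1
      by (simp add: hom_def)
  qed
  define g where "g = A.extf x y g0"
  have ga: "(x, y, g) \<in> lim_arr n Phi P" and gt: "\<And>S. topS n S \<Longrightarrow> g S = g0 S"
  proof -
    have gT0: "\<And>S. topS n S \<Longrightarrow> g0 S \<in> cArr (Phi S) \<and> cDom (Phi S) (g0 S) = fst x S \<and> cCod (Phi S) (g0 S) = fst y S"
      using g0 by blast
    show "(x, y, g) \<in> lim_arr n Phi P" "\<And>S. topS n S \<Longrightarrow> g S = g0 S"
      using A.ext_lemma[OF x y gT0 n0] unfolding g_def by auto
  qed
  have fg: "A.famOK x y g" and ng: "\<And>U V. U \<in> Bn n \<Longrightarrow> V \<in> Bn n \<Longrightarrow> U \<subseteq> V \<Longrightarrow> A.natp x y g U V"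
    using ga unfolding A.larr_iff by auto
  note gg = A.famOKD[OF fg]
  have thk: "farr (theta U) (g U) = k U" if U: "U \<in> Bn n" for U
  proof -
    let ?M = "mx n U"
    have M: "maxl n ?M" "U \<subseteq> ?M" using mx[OF U] by auto
    have Mb: "?M \<in> Bn n" "topS n ?M" using M maxl_Bn maxl_top by auto
    have kM: "farr (theta ?M) (g ?M) = k ?M" using gt[OF Mb(2)] g0[OF Mb(2)] by simp
    have "cComp (Phi' U) (farr (theta U) (g U)) (farr (theta U) (snd x U ?M)) =
          farr (theta U) (cComp (Phi U) (snd y U ?M) (farr (P U ?M) (g ?M)))"
      using ng[OF U Mb(1) M(2)] U Mb M gg lx[of U ?M] unfolding A.natp_def by (metis th_comp)
    also have "\<dots> = cComp (Phi' U) (k U) (farr (theta U) (snd x U ?M))"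
      using nk[OF U Mb(1) M(2)] U Mb M gg ly[of U ?M] kM unfolding B.natp_def by (simp add: Fobj_snd)
    finally have eq: "cComp (Phi' U) (farr (theta U) (g U)) (farr (theta U) (snd x U ?M)) =
        cComp (Phi' U) (k U) (farr (theta U) (snd x U ?M))" .
    have i: "c_iso (Phi' U) (farr (theta U) (snd x U ?M))" using U Mb M lx by (simp add: gpd_iso)
    show ?thesis
      by (rule iso_cancel_right[OF _ i _ _ _ _ eq]) (use U Mb M lx gg kk in \<open>simp_all add: Fobj_fst\<close>)
  qed
  have "farr F (x, y, g) = h"
    unfolding Farr he using thk kk by (auto intro!: ext)
  moreover have "(x, y, g) \<in> hom (twolim n Phi P) x y" using ga by (simp add: hom_def)
  ultimately show "\<exists>f\<in>hom (twolim n Phi P) x y. farr F f = h" by blast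
qed

end




context two begin

definition "a0 y S = (SOME a. a \<in> cObj (Phi S) \<and> (\<exists>e. e \<in> hom (Phi' S) (fobj (theta S) a) (fst y S)))"
definition "ph y S = (SOME e. e \<in> hom (Phi' S) (fobj (theta S) (a0 y S)) (fst y S))"
definition "al0 y S T = (SOME f. f \<in> hom (Phi S) (fobj (P S T) (a0 y T)) (a0 y S) \<and>
    farr (theta S) f = cComp (Phi' S) (ginv (Phi' S) (ph y S)) (cComp (Phi' S) (snd y S T) (farr (P' S T) (ph y T))))"

lemma a0_ph: assumes y: "y \<in> lim_obj n Phi' P'" and S: "topS n S"
  shows "a0 y S \<in> cObj (Phi S)" "ph y S \<in> cArr (Phi' S)" "cDom (Phi' S) (ph y S) = fobj (theta S) (a0 y S)"
    "cCod (Phi' S) (ph y S) = fst y S"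
proof -
  have Sb: "S \<in> Bn n" using S topS_Bn by auto
  have "fst y S \<in> cObj (Phi' S)" using B.lobj(1)[OF y Sb] .
  then obtain a e where "a \<in> cObj (Phi S)" "e \<in> hom (Phi' S) (fobj (theta S) a) (fst y S)"
    using top_ff(3)[OF S] unfolding esF_def by blast
  then have 1: "a0 y S \<in> cObj (Phi S) \<and> (\<exists>e. e \<in> hom (Phi' S) (fobj (theta S) (a0 y S)) (fst y S))"
    unfolding a0_def using someI[of "\<lambda>a. a \<in> cObj (Phi S) \<and> (\<exists>e. e \<in> hom (Phi' S) (fobj (theta S) a) (fst y S))" a] by blast
  then obtain e where "e \<in> hom (Phi' S) (fobj (theta S) (a0 y S)) (fst y S)" by blast
  then have "ph y S \<in> hom (Phi' S) (fobj (theta S) (a0 y S)) (fst y S)" unfolding ph_def by (rule someI)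
  then show "ph y S \<in> cArr (Phi' S)" "cDom (Phi' S) (ph y S) = fobj (theta S) (a0 y S)"
    "cCod (Phi' S) (ph y S) = fst y S" by (auto simp: hom_def)
  show "a0 y S \<in> cObj (Phi S)" using 1 by blast
qed

lemma al0: assumes y: "y \<in> lim_obj n Phi' P'" and S: "topS n S" and T: "topS n T" and ST: "S \<subseteq> T"
  shows "al0 y S T \<in> cArr (Phi S)" "cDom (Phi S) (al0 y S T) = fobj (P S T) (a0 y T)"
    "cCod (Phi S) (al0 y S T) = a0 y S"
    "farr (theta S) (al0 y S T) = cComp (Phi' S) (ginv (Phi' S) (ph y S)) (cComp (Phi' S) (snd y S T) (farr (P' S T) (ph y T)))"
proof -
  have Sb: "S \<in> Bn n" and Tb: "T \<in> Bn n" using S T topS_Bn by auto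
  note ly = B.lobj(2-4)[OF y Sb Tb ST]
  note pS = a0_ph[OF y S] and pT = a0_ph[OF y T]
  let ?h = "cComp (Phi' S) (ginv (Phi' S) (ph y S)) (cComp (Phi' S) (snd y S T) (farr (P' S T) (ph y T)))"
  have "?h \<in> hom (Phi' S) (fobj (theta S) (fobj (P S T) (a0 y T))) (fobj (theta S) (a0 y S))"
    using Sb Tb ST ly pS pT by (simp add: hom_def)
  then obtain f where "f \<in> hom (Phi S) (fobj (P S T) (a0 y T)) (a0 y S) \<and> farr (theta S) f = ?h"
    using top_ff(2)[OF S] pS pT Sb Tb ST unfolding fullF_def by (meson A.P_obj)
  then have "al0 y S T \<in> hom (Phi S) (fobj (P S T) (a0 y T)) (a0 y S) \<and> farr (theta S) (al0 y S T) = ?h"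
    unfolding al0_def by (rule someI)
  then show "al0 y S T \<in> cArr (Phi S)" "cDom (Phi S) (al0 y S T) = fobj (P S T) (a0 y T)"
    "cCod (Phi S) (al0 y S T) = a0 y S" "farr (theta S) (al0 y S T) = ?h" by (auto simp: hom_def)
qed

lemma al0_id: assumes y: "y \<in> lim_obj n Phi' P'" and S: "topS n S"
  shows "al0 y S S = cId (Phi S) (a0 y S)"
proof -
  have Sb: "S \<in> Bn n" using S topS_Bn by auto
  note pS = a0_ph[OF y S] and q = al0[OF y S S order_refl]
  have "farr (theta S) (al0 y S S) = farr (theta S) (cId (Phi S) (a0 y S))"
    using q(4) pS Sb B.lobj(5)[OF y Sb] by simp
  then show ?thesis
    using ffD[OF top_ff(1)[OF S], of "al0 y S S" "a0 y S" "a0 y S" "cId (Phi S) (a0 y S)"] q pS Sb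
    by (simp add: hom_def)
qed

lemma al0_coc: assumes y: "y \<in> lim_obj n Phi' P'" and S: "topS n S" and T: "topS n T" and W: "topS n W"
   and ST: "S \<subseteq> T" and TW: "T \<subseteq> W"
  shows "al0 y S W = cComp (Phi S) (al0 y S T) (farr (P S T) (al0 y T W))"
proof -
  have Sb: "S \<in> Bn n" and Tb: "T \<in> Bn n" and Wb: "W \<in> Bn n" using S T W topS_Bn by auto
  have SW: "S \<subseteq> W" using ST TW by blast
  note pS = a0_ph[OF y S] and pT = a0_ph[OF y T] and pW = a0_ph[OF y W]
  note q1 = al0[OF y S W SW] and q2 = al0[OF y S T ST] and q3 = al0[OF y T W TW]
  note ly = B.lobj(2-4)[OF y]
  have cy: "snd y S W = cComp (Phi' S) (snd y S T) (farr (P' S T) (snd y T W))"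
    using B.lobj_coc[OF y Sb Tb Wb ST TW] .
  note facts = q1(1-3) q2(1-3) q3(1-3) pS pT pW Sb Tb Wb ST TW SW ly[of S T] ly[of T W] ly[of S W]
     B.lobj(1)[OF y Sb] B.lobj(1)[OF y Tb] B.lobj(1)[OF y Wb]
  have r1: "farr (theta S) (cComp (Phi S) (al0 y S T) (farr (P S T) (al0 y T W))) =
     cComp (Phi' S) (farr (theta S) (al0 y S T)) (farr (P' S T) (farr (theta T) (al0 y T W)))"
    using facts by simp
  also have "\<dots> = cComp (Phi' S) (cComp (Phi' S) (ginv (Phi' S) (ph y S)) (cComp (Phi' S) (snd y S T) (farr (P' S T) (ph y T))))
     (farr (P' S T) (cComp (Phi' T) (ginv (Phi' T) (ph y T)) (cComp (Phi' T) (snd y T W) (farr (P' T W) (ph y W)))))"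
    by (simp only: q2(4) q3(4))
  also have "\<dots> = cComp (Phi' S) (ginv (Phi' S) (ph y S)) (cComp (Phi' S) (cComp (Phi' S) (snd y S T) (farr (P' S T) (snd y T W))) (farr (P' S W) (ph y W)))"
    using facts by (simp add: cat_assoc)
  also have "\<dots> = farr (theta S) (al0 y S W)"
    unfolding q1(4) cy ..
  finally have eqn: "farr (theta S) (al0 y S W) = farr (theta S) (cComp (Phi S) (al0 y S T) (farr (P S T) (al0 y T W)))"
    by simp
  have "cComp (Phi S) (al0 y S T) (farr (P S T) (al0 y T W)) \<in> cArr (Phi S)"
    using q1(1-3) q2(1-3) q3(1-3) pS pT pW Sb Tb Wb ST TW SW by simp
  have "cDom (Phi S) (cComp (Phi S) (al0 y S T) (farr (P S T) (al0 y T W))) = fobj (P S W) (a0 y W)"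
    using q1(1-3) q2(1-3) q3(1-3) pS pT pW Sb Tb Wb ST TW SW by simp
  show ?thesis
    by (rule ffD[OF top_ff(1)[OF S] _ _ eqn]) (use q1(1-3) q2(1-3) q3(1-3) pS pT pW Sb Tb Wb ST TW SW in \<open>simp_all add: hom_iff\<close>)
qed

definition "TU U = {V. topS n V \<and> U \<subseteq> V}"
definition "MU U = {M. maxl n M \<and> U \<subseteq> M}"
definition "cU y U V = fobj (P U V) (a0 y V)"
definition "rU y U V W = farr (P U V) (al0 y V W)"
definition "eps y U = (SOME e. (\<forall>V\<in>TU U. e V \<in> cArr (Phi U) \<and> cDom (Phi U) (e V) = cU y U V \<and> cCod (Phi U) (e V) = cU y U (mx n U)) \<and>
      (\<forall>V\<in>TU U. \<forall>W\<in>TU U. V \<subseteq> W \<longrightarrow> e W = cComp (Phi U) (e V) (rU y U V W)) \<and> e (mx n U) = cId (Phi U) (cU y U (mx n U)))"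

lemma TU_facts: assumes "V \<in> TU U" shows "topS n V" "U \<subseteq> V" "V \<in> Bn n"
  using assms topS_Bn unfolding TU_def by auto

lemma cfacts:
  assumes y: "y \<in> lim_obj n Phi' P'" and U: "U \<in> Bn n"
  shows "mx n U \<in> MU U" "MU U \<subseteq> TU U"
    "\<And>V. V \<in> TU U \<Longrightarrow> \<exists>M\<in>MU U. V \<subseteq> M"
    "\<And>M M'. M \<in> MU U \<Longrightarrow> M' \<in> MU U \<Longrightarrow> M \<inter> M' \<in> TU U"
    "\<And>M M' M''. M \<in> MU U \<Longrightarrow> M' \<in> MU U \<Longrightarrow> M'' \<in> MU U \<Longrightarrow> M \<inter> M' \<inter> M'' \<in> TU U"
    "\<And>V. V \<in> TU U \<Longrightarrow> cU y U V \<in> cObj (Phi U)"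
    "\<And>V W. V \<in> TU U \<Longrightarrow> W \<in> TU U \<Longrightarrow> V \<subseteq> W \<Longrightarrow>
       rU y U V W \<in> cArr (Phi U) \<and> cDom (Phi U) (rU y U V W) = cU y U W \<and> cCod (Phi U) (rU y U V W) = cU y U V"
    "\<And>V. V \<in> TU U \<Longrightarrow> rU y U V V = cId (Phi U) (cU y U V)"
    "\<And>V W X. V \<in> TU U \<Longrightarrow> W \<in> TU U \<Longrightarrow> X \<in> TU U \<Longrightarrow> V \<subseteq> W \<Longrightarrow> W \<subseteq> X \<Longrightarrow>
       rU y U V X = cComp (Phi U) (rU y U V W) (rU y U W X)"
proof -
  show "mx n U \<in> MU U" using mx[OF U] unfolding MU_def by auto
  show "MU U \<subseteq> TU U" unfolding MU_def TU_def using maxl_top by auto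
  show "\<And>V. V \<in> TU U \<Longrightarrow> \<exists>M\<in>MU U. V \<subseteq> M"
  proof -
    fix V assume V: "V \<in> TU U"
    then have "V \<in> Bn n" "U \<subseteq> V" using TU_facts by auto
    then show "\<exists>M\<in>MU U. V \<subseteq> M" using mx[of V n] unfolding MU_def by (intro bexI[of _ "mx n V"]) auto
  qed
  show "\<And>M M'. M \<in> MU U \<Longrightarrow> M' \<in> MU U \<Longrightarrow> M \<inter> M' \<in> TU U"
    unfolding MU_def TU_def using maxl_int2 by auto
  show "\<And>M M' M''. M \<in> MU U \<Longrightarrow> M' \<in> MU U \<Longrightarrow> M'' \<in> MU U \<Longrightarrow> M \<inter> M' \<inter> M'' \<in> TU U"
    unfolding MU_def TU_def using maxl_int3 by auto
  show "\<And>V. V \<in> TU U \<Longrightarrow> cU y U V \<in> cObj (Phi U)"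
    unfolding cU_def using TU_facts a0_ph[OF y] U by simp
  show "\<And>V W. V \<in> TU U \<Longrightarrow> W \<in> TU U \<Longrightarrow> V \<subseteq> W \<Longrightarrow>
       rU y U V W \<in> cArr (Phi U) \<and> cDom (Phi U) (rU y U V W) = cU y U W \<and> cCod (Phi U) (rU y U V W) = cU y U V"
  proof -
    fix V W assume V: "V \<in> TU U" and W: "W \<in> TU U" and VW: "V \<subseteq> W"
    note v = TU_facts[OF V] and w = TU_facts[OF W]
    show "rU y U V W \<in> cArr (Phi U) \<and> cDom (Phi U) (rU y U V W) = cU y U W \<and> cCod (Phi U) (rU y U V W) = cU y U V"
      unfolding rU_def cU_def using al0[OF y v(1) w(1) VW] a0_ph[OF y w(1)] v w VW U by simp
  qed
  show "\<And>V. V \<in> TU U \<Longrightarrow> rU y U V V = cId (Phi U) (cU y U V)"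
  proof -
    fix V assume V: "V \<in> TU U"
    note v = TU_facts[OF V]
    show "rU y U V V = cId (Phi U) (cU y U V)"
      unfolding rU_def cU_def using al0_id[OF y v(1)] a0_ph[OF y v(1)] v U by simp
  qed
  show "\<And>V W X. V \<in> TU U \<Longrightarrow> W \<in> TU U \<Longrightarrow> X \<in> TU U \<Longrightarrow> V \<subseteq> W \<Longrightarrow> W \<subseteq> X \<Longrightarrow>
       rU y U V X = cComp (Phi U) (rU y U V W) (rU y U W X)"
  proof -
    fix V W X assume V: "V \<in> TU U" and W: "W \<in> TU U" and X: "X \<in> TU U" and VW: "V \<subseteq> W" and WX: "W \<subseteq> X"
    note v = TU_facts[OF V] and w = TU_facts[OF W] and x = TU_facts[OF X]
    have VX: "V \<subseteq> X" using VW WX by blast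
    show "rU y U V X = cComp (Phi U) (rU y U V W) (rU y U W X)"
      unfolding rU_def al0_coc[OF y v(1) w(1) x(1) VW WX]
      using al0[OF y v(1) w(1) VW] al0[OF y w(1) x(1) WX] a0_ph[OF y x(1)] v w x VW WX U by simp
  qed
qed

lemma eps: assumes y: "y \<in> lim_obj n Phi' P'" and U: "U \<in> Bn n"
  shows "\<And>V. V \<in> TU U \<Longrightarrow> eps y U V \<in> cArr (Phi U) \<and> cDom (Phi U) (eps y U V) = cU y U V \<and> cCod (Phi U) (eps y U V) = cU y U (mx n U)"
    "\<And>V W. V \<in> TU U \<Longrightarrow> W \<in> TU U \<Longrightarrow> V \<subseteq> W \<Longrightarrow> eps y U W = cComp (Phi U) (eps y U V) (rU y U V W)"
    "eps y U (mx n U) = cId (Phi U) (cU y U (mx n U))"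
proof -
  note sf = cfacts[OF y U]
  have ex: "\<exists>e. (\<forall>V\<in>TU U. e V \<in> cArr (Phi U) \<and> cDom (Phi U) (e V) = cU y U V \<and> cCod (Phi U) (e V) = cU y U (mx n U)) \<and>
      (\<forall>V\<in>TU U. \<forall>W\<in>TU U. V \<subseteq> W \<longrightarrow> e W = cComp (Phi U) (e V) (rU y U V W)) \<and> e (mx n U) = cId (Phi U) (cU y U (mx n U))"
    by (rule cone_exists[OF A.gpd[OF U] sf(1,2,3,5,6,7,8,9)])
  have H: "(\<forall>V\<in>TU U. eps y U V \<in> cArr (Phi U) \<and> cDom (Phi U) (eps y U V) = cU y U V \<and> cCod (Phi U) (eps y U V) = cU y U (mx n U)) \<and>
      (\<forall>V\<in>TU U. \<forall>W\<in>TU U. V \<subseteq> W \<longrightarrow> eps y U W = cComp (Phi U) (eps y U V) (rU y U V W)) \<and> eps y U (mx n U) = cId (Phi U) (cU y U (mx n U))"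
    unfolding eps_def using someI_ex[OF ex] .
  show "\<And>V. V \<in> TU U \<Longrightarrow> eps y U V \<in> cArr (Phi U) \<and> cDom (Phi U) (eps y U V) = cU y U V \<and> cCod (Phi U) (eps y U V) = cU y U (mx n U)"
    using H[THEN conjunct1] by (rule bspec)
  show "\<And>V W. V \<in> TU U \<Longrightarrow> W \<in> TU U \<Longrightarrow> V \<subseteq> W \<Longrightarrow> eps y U W = cComp (Phi U) (eps y U V) (rU y U V W)"
    using H[THEN conjunct2, THEN conjunct1] by blast
  show "eps y U (mx n U) = cId (Phi U) (cU y U (mx n U))"
    using H[THEN conjunct2, THEN conjunct2] .
qed

lemma TU_mono: "U \<subseteq> V \<Longrightarrow> TU V \<subseteq> TU U" unfolding TU_def by auto

lemma mx_TU: assumes "U \<in> Bn n" "V \<in> Bn n" "U \<subseteq> V" shows "mx n V \<in> TU U" "mx n V \<in> TU V"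
  using mx[OF assms(2)] maxl_top assms(3) unfolding TU_def by auto

lemma eps_P:
  assumes y: "y \<in> lim_obj n Phi' P'" and U: "U \<in> Bn n" and V: "V \<in> Bn n" and UV: "U \<subseteq> V" and X: "X \<in> TU V"
  shows "farr (P U V) (eps y V X) = cComp (Phi U) (ginv (Phi U) (eps y U (mx n V))) (eps y U X)"
proof -
  note sV = cfacts[OF y V] and sU = cfacts[OF y U]
  note eV = eps[OF y V] and eU = eps[OF y U]
  have sub: "TU V \<subseteq> TU U" using TU_mono[OF UV] .
  have mV: "mx n V \<in> TU U" "mx n V \<in> TU V" using mx_TU[OF U V UV] by auto
  let ?e = "\<lambda>X. farr (P U V) (eps y V X)"
  let ?e' = "\<lambda>X. cComp (Phi U) (ginv (Phi U) (eps y U (mx n V))) (eps y U X)"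
  have cUP: "fobj (P U V) (cU y V X) = cU y U X" if "X \<in> TU V" for X
    unfolding cU_def using TU_facts[OF that] U V UV a0_ph[OF y] by simp
  have rUP: "farr (P U V) (rU y V X Y) = rU y U X Y" if "X \<in> TU V" "Y \<in> TU V" "X \<subseteq> Y" for X Y
    unfolding rU_def using TU_facts[OF that(1)] TU_facts[OF that(2)] U V UV al0[OF y _ _ that(3)] by simp
  have r: "\<And>X Y. X \<in> TU V \<Longrightarrow> Y \<in> TU V \<Longrightarrow> X \<subseteq> Y \<Longrightarrow>
       rU y U X Y \<in> cArr (Phi U) \<and> cDom (Phi U) (rU y U X Y) = cU y U Y \<and> cCod (Phi U) (rU y U X Y) = cU y U X"
    using sU(7) sub by blast
  have e: "?e X \<in> cArr (Phi U) \<and> cDom (Phi U) (?e X) = cU y U X \<and> cCod (Phi U) (?e X) = cU y U (mx n V)"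
    if X: "X \<in> TU V" for X
    using eV(1)[OF X] U V UV cUP[OF X] cUP[OF mV(2)] by auto
  have ec: "?e Z = cComp (Phi U) (?e X) (rU y U X Z)" if "X \<in> TU V" "Z \<in> TU V" "X \<subseteq> Z" for X Z
    using eV(2)[OF that] eV(1)[OF that(1)] sV(7)[OF that] U V UV rUP[OF that] by simp
  have e': "?e' X \<in> cArr (Phi U) \<and> cDom (Phi U) (?e' X) = cU y U X \<and> cCod (Phi U) (?e' X) = cU y U (mx n V)"
    if X: "X \<in> TU V" for X
    using eU(1)[of X] eU(1)[OF mV(1)] X sub U by auto
  have ec': "?e' Z = cComp (Phi U) (?e' X) (rU y U X Z)" if "X \<in> TU V" "Z \<in> TU V" "X \<subseteq> Z" for X Z
  proof -
    have XZ: "X \<in> TU U" "Z \<in> TU U" using that sub by auto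
    show ?thesis using eU(2)[OF XZ that(3)] eU(1)[OF XZ(1)] eU(1)[OF mV(1)] r[OF that] U
      by (simp add: cat_assoc)
  qed
  have eq0: "?e (mx n V) = ?e' (mx n V)"
    using eV(3) eU(1)[OF mV(1)] U V UV sU(6)[OF mV(1)] sV(6)[OF mV(2)] cUP[OF mV(2)] by simp
  show ?thesis
    using cone_unique[where C="Phi U" and Mx="MU V" and T="TU V" and r="rU y U" and c="cU y U"
      and d="cU y U (mx n V)" and e="?e" and e'="?e'", OF A.gpd[OF U] sV(1,2,3,4) r e ec e' ec' eq0 X] by simp
qed

definition "mp V = (if topS n V then V else mx n V)"
definition "aa y U = (if U \<in> Bn n then (if topS n U then a0 y U else fobj (P U (mx n U)) (a0 y (mx n U))) else undefined)"
definition "ala y U V = (if U \<in> Bn n \<and> V \<in> Bn n \<and> U \<subseteq> V then (if topS n U then al0 y U V else eps y U (mp V)) else undefined)"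

lemma mp_TU: assumes "U \<in> Bn n" "V \<in> Bn n" "U \<subseteq> V" shows "mp V \<in> TU U" "mp V \<in> TU V"
  using mx_TU[OF assms] assms unfolding mp_def TU_def by auto

lemma aa_P: assumes y: "y \<in> lim_obj n Phi' P'" and U: "U \<in> Bn n" and V: "V \<in> Bn n" and UV: "U \<subseteq> V"
  shows "fobj (P U V) (aa y V) = cU y U (mp V)"
proof (cases "topS n V")
  case True then show ?thesis unfolding aa_def mp_def cU_def using V by simp
next
  case False
  have m: "maxl n (mx n V)" "V \<subseteq> mx n V" using mx[OF V] by auto
  have mb: "mx n V \<in> Bn n" "topS n (mx n V)" using m maxl_Bn maxl_top by auto
  show ?thesis unfolding aa_def mp_def cU_def using False V U UV m mb a0_ph(1)[OF y mb(2)] by simp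
qed

lemma aa_low: "U \<in> Bn n \<Longrightarrow> \<not> topS n U \<Longrightarrow> aa y U = cU y U (mx n U)"
  unfolding aa_def cU_def by simp

lemma aa_obj: assumes y: "y \<in> lim_obj n Phi' P'" and U: "U \<in> Bn n" shows "aa y U \<in> cObj (Phi U)"
proof (cases "topS n U")
  case True then show ?thesis unfolding aa_def using a0_ph[OF y True] U by simp
next
  case False
  then show ?thesis using aa_low[OF U False, of y] cfacts(6)[OF y U] mx_TU[OF U U order_refl] by simp
qed

lemma aa_lim: assumes y: "y \<in> lim_obj n Phi' P'" shows "(aa y, ala y) \<in> lim_obj n Phi P"
proof (rule A.lobjI)
  show "\<forall>U. U \<notin> Bn n \<longrightarrow> aa y U = undefined" unfolding aa_def by simp
  show "\<forall>U V. \<not> (U \<in> Bn n \<and> V \<in> Bn n \<and> U \<subseteq> V) \<longrightarrow> ala y U V = undefined" unfolding ala_def by simp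
  show "\<forall>U\<in>Bn n. aa y U \<in> cObj (Phi U)" using aa_obj[OF y] by blast
  show "\<forall>U\<in>Bn n. \<forall>V\<in>Bn n. U \<subseteq> V \<longrightarrow> ala y U V \<in> hom (Phi U) (fobj (P U V) (aa y V)) (aa y U)"
  proof (intro ballI impI)
    fix U V assume U: "U \<in> Bn n" and V: "V \<in> Bn n" and UV: "U \<subseteq> V"
    show "ala y U V \<in> hom (Phi U) (fobj (P U V) (aa y V)) (aa y U)"
    proof (cases "topS n U")
      case True
      then have Vt: "topS n V" using topS_up UV V by blast
      show ?thesis unfolding ala_def aa_def using al0[OF y True Vt UV] True Vt U V UV by (simp add: hom_iff)
    next
      case False
      have "eps y U (mp V) \<in> cArr (Phi U) \<and> cDom (Phi U) (eps y U (mp V)) = cU y U (mp V) \<and>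
          cCod (Phi U) (eps y U (mp V)) = cU y U (mx n U)" using eps(1)[OF y U mp_TU(1)[OF U V UV]] .
      then show ?thesis unfolding ala_def using False U V UV aa_P[OF y U V UV] aa_low[OF U False, of y] by (simp add: hom_iff)
    qed
  qed
  show "\<forall>U\<in>Bn n. ala y U U = cId (Phi U) (aa y U)"
  proof
    fix U assume U: "U \<in> Bn n"
    show "ala y U U = cId (Phi U) (aa y U)"
    proof (cases "topS n U")
      case True then show ?thesis unfolding ala_def aa_def using al0_id[OF y True] U by simp
    next
      case False then show ?thesis unfolding ala_def using U eps(3)[OF y U] aa_low[OF U False, of y] by (simp add: mp_def)
    qed
  qed
  show "\<forall>U\<in>Bn n. \<forall>V\<in>Bn n. \<forall>W\<in>Bn n. U \<subseteq> V \<longrightarrow> V \<subseteq> W \<longrightarrow>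
        ala y U W = cComp (Phi U) (ala y U V) (farr (P U V) (ala y V W))"
  proof (intro ballI impI)
    fix U V W assume U: "U \<in> Bn n" and V: "V \<in> Bn n" and W: "W \<in> Bn n" and UV: "U \<subseteq> V" and VW: "V \<subseteq> W"
    have UW: "U \<subseteq> W" using UV VW by blast
    show "ala y U W = cComp (Phi U) (ala y U V) (farr (P U V) (ala y V W))"
    proof (cases "topS n U")
      case True
      then have Vt: "topS n V" and Wt: "topS n W" using topS_up UV VW V W by blast+
      show ?thesis unfolding ala_def using al0_coc[OF y True Vt Wt UV VW] True Vt Wt U V W UV VW UW by simp
    next
      case Ul: False
      show ?thesis
      proof (cases "topS n V")
        case True
        then have Wt: "topS n W" using topS_up VW W by blast
        have TV: "V \<in> TU U" "W \<in> TU U" using True Wt UV UW unfolding TU_def by auto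
        show ?thesis unfolding ala_def using eps(2)[OF y U TV VW] True Wt Ul U V W UV VW UW
          by (simp add: mp_def rU_def)
      next
        case Vl: False
        have X: "mp W \<in> TU V" using mp_TU(1)[OF V W VW] .
        have X': "mp W \<in> TU U" "mx n V \<in> TU U" using mp_TU(1)[OF U W UW] mx_TU[OF U V UV] by auto
        have e1: "farr (P U V) (eps y V (mp W)) = cComp (Phi U) (ginv (Phi U) (eps y U (mx n V))) (eps y U (mp W))"
          using eps_P[OF y U V UV X] .
        show ?thesis unfolding ala_def using Ul Vl U V W UV VW UW e1 eps(1)[OF y U X'(1)] eps(1)[OF y U X'(2)]
          by (simp add: mp_def cat_assoc)
      qed
    qed
  qed
qed

lemma F_es: "esF (twolim n Phi P) (twolim n Phi' P') F"
  unfolding esF_def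
proof
  fix y assume "y \<in> cObj (twolim n Phi' P')"
  then have y: "y \<in> lim_obj n Phi' P'" by simp
  let ?x = "(aa y, ala y)"
  have x: "?x \<in> lim_obj n Phi P" using aa_lim[OF y] .
  have Fx: "fobj F ?x \<in> lim_obj n Phi' P'" using F_obj[OF x] .
  have gT: "ph y S \<in> cArr (Phi' S) \<and> cDom (Phi' S) (ph y S) = fst (fobj F ?x) S \<and> cCod (Phi' S) (ph y S) = fst y S"
    if S: "topS n S" for S
    using a0_ph[OF y S] topS_Bn[OF S] S by (simp add: Fobj_fst aa_def)
  have nT: "B.natp (fobj F ?x) y (ph y) S T" if S: "topS n S" and T: "topS n T" and ST: "S \<subseteq> T" for S T
  proof -
    have Sb: "S \<in> Bn n" and Tb: "T \<in> Bn n" using S T topS_Bn by auto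
    have sx: "snd (fobj F ?x) S T = farr (theta S) (al0 y S T)"
      using Fobj_snd[OF Sb Tb ST, of ?x] S Sb Tb ST by (simp add: ala_def)
    show ?thesis unfolding B.natp_def sx al0(4)[OF y S T ST]
      using a0_ph[OF y S] a0_ph[OF y T] B.lobj(2-4)[OF y Sb Tb ST] Sb Tb ST B.lobj(1)[OF y Sb]
      by (simp add: cat_assoc)
  qed
  have "(fobj F ?x, y, B.extf (fobj F ?x) y (ph y)) \<in> lim_arr n Phi' P'"
    using B.ext_lemma(1)[OF Fx y gT nT] by blast
  then have "(fobj F ?x, y, B.extf (fobj F ?x) y (ph y)) \<in> hom (twolim n Phi' P') (fobj F ?x) y"
    by (simp add: hom_def)
  moreover have "?x \<in> cObj (twolim n Phi P)" using x by simp
  ultimately show "\<exists>x\<in>cObj (twolim n Phi P). \<exists>e. e \<in> hom (twolim n Phi' P') (fobj F x) y" by blast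
qed

theorem main: "equivalence (twolim n Phi P) (twolim n Phi' P') F"
  by (rule ff_es_equivalence[OF A.twolim_groupoid B.twolim_groupoid F_functor F_faithful F_full F_es])

end


theorem corollary5p3:
  fixes n :: nat
    and Phi :: "nat set \<Rightarrow> ('o, 'm) cat"
    and P :: "nat set \<Rightarrow> nat set \<Rightarrow> ('o, 'm, 'o, 'm) func"
    and Phi' :: "nat set \<Rightarrow> ('o2, 'm2) cat"
    and P' :: "nat set \<Rightarrow> nat set \<Rightarrow> ('o2, 'm2, 'o2, 'm2) func"
    and theta :: "nat set \<Rightarrow> ('o, 'm, 'o2, 'm2) func"
  assumes "n \<ge> 3"
    and "gpd_presheaf n Phi P"
    and "gpd_presheaf n Phi' P'"
    and "gpd_nat_trans n Phi P Phi' P' theta"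
    and "\<forall>S. S \<subseteq> {1..n} \<and> n - 3 \<le> card S \<and> card S \<le> n - 1 \<longrightarrow>
              equivalence (Phi S) (Phi' S) (theta S)"
  shows "equivalence (twolim n Phi P) (twolim n Phi' P') (lim_func n theta)"
proof -
  have eq: "equivalence (Phi S) (Phi' S) (theta S)" if S: "topS n S" for S
  proof -
    have "S \<in> Bn n" "n - 3 \<le> card S" using S unfolding topS_def by auto
    then have "S \<subseteq> {1..n}" "card S \<le> n - 1" using Bn_fin[of S n] by auto
    then show ?thesis using assms(5) \<open>n - 3 \<le> card S\<close> by blast
  qed
  interpret two n Phi P Phi' P' theta
    using assms(2-4) eq by unfold_locales auto
  show ?thesis by (rule main)
qed

end
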